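(* Let $\Bbbk$ be a field of characteristic different from $2$. With $\Theta$ and $\Psi_-$ as below: (a) $\Theta\circ\Psi_-=\Theta=\Psi_-\circ\Theta$; (b) $\mathrm{Im}(\Psi_-)=\mathrm{Im}(\Theta)=\Pi_-$; (c) $\ker(\Psi_-)=\ker(\Theta)$.
   Context: $\mathcal{Q}\mathit{Sym}$ is the graded Hopf algebra of quasi-symmetric functions over $\Bbbk$ with basis $M_\alpha=\sum_{i_1<\cdots<i_k}x_{i_1}^{a_1}\cdots x_{i_k}^{a_k}$, coproduct $\Delta(M_\alpha)=\sum_{\alpha=\beta\gamma}M_\beta\otimes M_\gamma$. $\zeta_{\mathcal Q}$ is the character with $\zeta_{\mathcal Q}(M_\alpha)=1$ if $\alpha=(n)$ or $()$, $0$ otherwise. Characters multiply by convolution; $\bar\varphi(h)=(-1)^n\varphi(h)$ in degree $n$; $\varphi$ is even if $\bar\varphi=\varphi$, odd if $\bar\varphi=\varphi^{-1}$. Write $\zeta_{\mathcal Q}=(\zeta_{\mathcal Q})_+(\zeta_{\mathcal Q})_-$ for the unique decomposition with $(\zeta_{\mathcal Q})_+$ even and $(\zeta_{\mathcal Q})_-$ odd. For each character $\varphi$ there is a unique graded Hopf morphism $F\colon\mathcal{Q}\mathit{Sym}\to\mathcal{Q}\mathit{Sym}$ with $\zeta_{\mathcal Q}\circ F=\varphi$; $\Psi_-$ is the one for $\varphi=(\zeta_{\mathcal Q})_-$ and $\Theta$ the one for $\varphi=\bar\zeta_{\mathcal Q}^{-1}\zeta_{\mathcal Q}$. $\Pi_-$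 is the largest graded subcoalgebra of $\mathcal{Q}\mathit{Sym}$ on which $\bar\zeta_{\mathcal Q}=\zeta_{\mathcal Q}^{-1}$. *)

theory Defs
  imports Main "HOL-Library.Poly_Mapping"
begin

text \<open>The Hopf algebra QSym of quasi-symmetric functions over a field 'k,
  realised concretely in the monomial basis: an element is a finitely supported
  family of coefficients indexed by compositions (lists of positive naturals);
  the monomial quasi-symmetric function M_alpha is single alpha 1.\<close>

type_synonym 'k qsym = "nat list \<Rightarrow>\<^sub>0 'k"
type_synonym 'k qsym2 = "(nat list \<times> nat list) \<Rightarrow>\<^sub>0 'k"

definition is_comp :: "nat list \<Rightarrow> bool" where
  "is_comp a \<longleftrightarrow> (\<forall>x\<in>set a. 0 < x)"

definition QSym :: "'k::field qsym set" where
  "QSym = {f. \<forall>a\<in>Poly_Mapping.keys f. is_comp a}"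

definition Mb :: "nat list \<Rightarrow> 'k::field qsym" where
  "Mb a = Poly_Mapping.single a 1"

definition qsmult :: "'k::field \<Rightarrow> 'k qsym \<Rightarrow> 'k qsym" where
  "qsmult c f = (\<Sum>a\<in>Poly_Mapping.keys f. Poly_Mapping.single a (c * Poly_Mapping.lookup f a))"

definition hcomp :: "nat \<Rightarrow> 'k::field qsym \<Rightarrow> 'k qsym" where
  "hcomp n f = (\<Sum>a\<in>{a\<in>Poly_Mapping.keys f. sum_list a = n}. Poly_Mapping.single a (Poly_Mapping.lookup f a))"

text \<open>Quasi-shuffles (with multiplicity) of two compositions: M_a M_b is the sum
  of M_c over this list.\<close>
fun qsh :: "nat list \<Rightarrow> nat list \<Rightarrow> nat list list" where
  "qsh [] b = [b]"
| "qsh a [] = [a]"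
| "qsh (x # a) (y # b) =
     map ((#) x) (qsh a (y # b)) @ map ((#) y) (qsh (x # a) b) @ map ((#) (x + y)) (qsh a b)"

definition qmult :: "'k::field qsym \<Rightarrow> 'k qsym \<Rightarrow> 'k qsym" where
  "qmult f g = (\<Sum>a\<in>Poly_Mapping.keys f. \<Sum>b\<in>Poly_Mapping.keys g.
      qsmult (Poly_Mapping.lookup f a * Poly_Mapping.lookup g b) (sum_list (map Mb (qsh a b))))"

definition tensor :: "'k::field qsym \<Rightarrow> 'k qsym \<Rightarrow> 'k qsym2" where
  "tensor x y = (\<Sum>b\<in>Poly_Mapping.keys x. \<Sum>c\<in>Poly_Mapping.keys y. Poly_Mapping.single (b, c) (Poly_Mapping.lookup x b * Poly_Mapping.lookup y c))"

definition coprod :: "'k::field qsym \<Rightarrow> 'k qsym2" where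
  "coprod f = (\<Sum>a\<in>Poly_Mapping.keys f. \<Sum>i\<le>length a.
      Poly_Mapping.single (take i a, drop i a) (Poly_Mapping.lookup f a))"

definition counit :: "'k::field qsym \<Rightarrow> 'k" where
  "counit f = Poly_Mapping.lookup f []"

text \<open>Linear functionals on QSym are given by their values on the basis M_alpha
  (normalised to be 0 on non-compositions).\<close>
definition LF :: "(nat list \<Rightarrow> 'k::field) set" where
  "LF = {\<phi>. \<forall>a. \<not> is_comp a \<longrightarrow> \<phi> a = 0}"

definition ev :: "(nat list \<Rightarrow> 'k::field) \<Rightarrow> 'k qsym \<Rightarrow> 'k" where
  "ev \<phi> f = (\<Sum>a\<in>Poly_Mapping.keys f. Poly_Mapping.lookup f a * \<phi> a)"

definition is_character :: "(nat list \<Rightarrow> 'k::field) \<Rightarrow> bool" where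
  "is_character \<phi> \<longleftrightarrow> \<phi> \<in> LF \<and> \<phi> [] = 1 \<and>
     (\<forall>a b. is_comp a \<longrightarrow> is_comp b \<longrightarrow> ev \<phi> (qmult (Mb a) (Mb b)) = \<phi> a * \<phi> b)"

definition conv :: "(nat list \<Rightarrow> 'k::field) \<Rightarrow> (nat list \<Rightarrow> 'k) \<Rightarrow> nat list \<Rightarrow> 'k" where
  "conv \<phi> \<psi> a = (if is_comp a then (\<Sum>i\<le>length a. \<phi> (take i a) * \<psi> (drop i a)) else 0)"

definition eps :: "nat list \<Rightarrow> 'k::field" where
  "eps a = (if a = [] then 1 else 0)"

definition cinv :: "(nat list \<Rightarrow> 'k::field) \<Rightarrow> nat list \<Rightarrow> 'k" where
  "cinv \<phi> = (THE \<psi>. \<psi> \<in> LF \<and> conv \<phi> \<psi> = eps \<and> conv \<psi> \<phi> = eps)"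

definition cbar :: "(nat list \<Rightarrow> 'k::field) \<Rightarrow> nat list \<Rightarrow> 'k" where
  "cbar \<phi> a = (-1) ^ sum_list a * \<phi> a"

definition is_even :: "(nat list \<Rightarrow> 'k::field) \<Rightarrow> bool" where
  "is_even \<phi> \<longleftrightarrow> cbar \<phi> = \<phi>"

definition is_odd :: "(nat list \<Rightarrow> 'k::field) \<Rightarrow> bool" where
  "is_odd \<phi> \<longleftrightarrow> cbar \<phi> = cinv \<phi>"

definition zetaQ :: "nat list \<Rightarrow> 'k::field" where
  "zetaQ a = (if is_comp a \<and> length a \<le> 1 then 1 else 0)"

definition zeta_minus :: "nat list \<Rightarrow> 'k::field" where
  "zeta_minus = (THE \<psi>. \<exists>\<phi>. is_character \<phi> \<and> is_character \<psi> \<and> is_even \<phi> \<and> is_odd \<psi>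
                        \<and> zetaQ = conv \<phi> \<psi>)"

definition theta_char :: "nat list \<Rightarrow> 'k::field" where
  "theta_char = conv (cinv (cbar zetaQ)) zetaQ"

text \<open>Linear endomorphisms of QSym are given by the images of the basis
  (normalised to be 0 on non-compositions), extended linearly by lin.\<close>
definition lin :: "(nat list \<Rightarrow> 'k::field qsym) \<Rightarrow> 'k qsym \<Rightarrow> 'k qsym" where
  "lin F f = (\<Sum>a\<in>Poly_Mapping.keys f. qsmult (Poly_Mapping.lookup f a) (F a))"

definition tensor_map :: "(nat list \<Rightarrow> 'k::field qsym) \<Rightarrow> 'k qsym2 \<Rightarrow> 'k qsym2" where
  "tensor_map F t = (\<Sum>p\<in>Poly_Mapping.keys t. Poly_Mapping.map ((*) (Poly_Mapping.lookup t p)) (tensor (F (fst p)) (F (snd p))))"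

definition is_graded_hopf_morphism :: "(nat list \<Rightarrow> 'k::field qsym) \<Rightarrow> bool" where
  "is_graded_hopf_morphism F \<longleftrightarrow>
     (\<forall>a. \<not> is_comp a \<longrightarrow> F a = 0) \<and>
     (\<forall>a. is_comp a \<longrightarrow> F a \<in> QSym \<and> (\<forall>b\<in>Poly_Mapping.keys (F a). sum_list b = sum_list a)) \<and>
     F [] = Mb [] \<and>
     (\<forall>a b. is_comp a \<longrightarrow> is_comp b \<longrightarrow> lin F (qmult (Mb a) (Mb b)) = qmult (F a) (F b)) \<and>
     (\<forall>a. is_comp a \<longrightarrow> coprod (F a) = tensor_map F (coprod (Mb a))) \<and>
     (\<forall>a. is_comp a \<longrightarrow> counit (F a) = counit (Mb a))"

definition induced_morphism :: "(nat list \<Rightarrow> 'k::field) \<Rightarrow> nat list \<Rightarrow> 'k qsym" where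
  "induced_morphism \<phi> = (THE F. is_graded_hopf_morphism F \<and>
       (\<forall>a. is_comp a \<longrightarrow> ev zetaQ (F a) = \<phi> a))"

definition Psi_minus :: "nat list \<Rightarrow> 'k::field qsym" where
  "Psi_minus = induced_morphism zeta_minus"

definition Theta :: "nat list \<Rightarrow> 'k::field qsym" where
  "Theta = induced_morphism theta_char"

text \<open>C (x) C inside QSym (x) QSym: finite sums of pure tensors of elements of C.\<close>
inductive_set tensor_span :: "'k::field qsym set \<Rightarrow> 'k qsym2 set" for C where
  zero: "0 \<in> tensor_span C"
| add: "x \<in> C \<Longrightarrow> y \<in> C \<Longrightarrow> t \<in> tensor_span C \<Longrightarrow> tensor x y + t \<in> tensor_span C"

definition is_graded_subcoalgebra :: "'k::field qsym set \<Rightarrow> bool" where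
  "is_graded_subcoalgebra C \<longleftrightarrow> C \<subseteq> QSym \<and> 0 \<in> C \<and>
     (\<forall>f\<in>C. \<forall>g\<in>C. f + g \<in> C) \<and> (\<forall>c. \<forall>f\<in>C. qsmult c f \<in> C) \<and>
     (\<forall>f\<in>C. \<forall>n. hcomp n f \<in> C) \<and>
     (\<forall>f\<in>C. coprod f \<in> tensor_span C)"

definition Pi_minus_prop :: "'k::field qsym set \<Rightarrow> bool" where
  "Pi_minus_prop C \<longleftrightarrow> is_graded_subcoalgebra C \<and>
     (\<forall>f\<in>C. ev (cbar zetaQ) f = ev (cinv zetaQ) f)"

definition Pi_minus :: "'k::field qsym set" where
  "Pi_minus = (THE C. Pi_minus_prop C \<and> (\<forall>D. Pi_minus_prop D \<longrightarrow> D \<subseteq> C))"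

end

theory Submission
  imports Defs
begin


lemma lookup_Mb: "Poly_Mapping.lookup (Mb a :: 'k::field qsym) b = (if b = a then 1 else 0)"
  by (simp add: Mb_def lookup_single when_def)

lemma keys_Mb[simp]: "Poly_Mapping.keys (Mb a :: 'k::field qsym) = {a}"
  by (simp add: Mb_def)

definition EV :: "('a \<Rightarrow> 'k::field) \<Rightarrow> ('a \<Rightarrow>\<^sub>0 'k) \<Rightarrow> 'k" where
  "EV h t = (\<Sum>p\<in>Poly_Mapping.keys t. Poly_Mapping.lookup t p * h p)"

lemma EV_superset:
  assumes "finite S" "Poly_Mapping.keys t \<subseteq> S"
  shows "EV h t = (\<Sum>p\<in>S. Poly_Mapping.lookup t p * h p)"
  unfolding EV_def
  by (rule sum.mono_neutral_left) (use assms in \<open>auto simp: in_keys_iff\<close>)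

lemma EV_add: "EV h (t1 + t2) = EV h t1 + EV h t2"
proof -
  let ?S = "Poly_Mapping.keys t1 \<union> Poly_Mapping.keys t2"
  have f: "finite ?S" by simp
  have "EV h (t1 + t2) = (\<Sum>p\<in>?S. Poly_Mapping.lookup (t1 + t2) p * h p)"
    by (rule EV_superset[OF f]) (rule keys_add)
  also have "\<dots> = (\<Sum>p\<in>?S. Poly_Mapping.lookup t1 p * h p) + (\<Sum>p\<in>?S. Poly_Mapping.lookup t2 p * h p)"
    by (simp add: lookup_add distrib_right sum.distrib)
  also have "\<dots> = EV h t1 + EV h t2"
    by (subst (1 2) EV_superset[OF f]) auto
  finally show ?thesis .
qed

lemma EV_zero[simp]: "EV h 0 = 0" by (simp add: EV_def)

lemma EV_single[simp]: "EV h (Poly_Mapping.single k c) = c * h k"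
  by (cases "c = 0") (simp_all add: EV_def)

lemma EV_sum: "EV h (sum g S) = (\<Sum>s\<in>S. EV h (g s))"
  by (induction S rule: infinite_finite_induct) (auto simp: EV_add)

lemma EV_minus: "EV h (t1 - t2) = EV h t1 - EV h t2"
  by (metis EV_add add_diff_cancel diff_add_cancel)

lemma EV_uminus: "EV h (- t) = - EV h t"
  by (metis EV_minus EV_zero diff_0)

lemma EV_mono_eq: "(\<And>p. p \<in> Poly_Mapping.keys t \<Longrightarrow> h p = g p) \<Longrightarrow> EV h t = EV g t"
  unfolding EV_def by (rule sum.cong) auto

lemma EV_lin_fun: "EV (\<lambda>p. h p + g p) t = EV h t + EV g t"
  by (simp add: EV_def distrib_left sum.distrib)

lemma EV_scal_fun: "EV (\<lambda>p. c * h p) t = c * EV h t"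
  by (simp add: EV_def sum_distrib_left ac_simps)

lemma EV_sum_fun: "EV (\<lambda>p. \<Sum>s\<in>S. h s p) t = (\<Sum>s\<in>S. EV (h s) t)"
  by (simp add: EV_def sum_distrib_left sum.swap[of _ S])

lemma EV_lookup: "EV (\<lambda>p. if p = k then 1 else 0) t = Poly_Mapping.lookup t k"
  unfolding EV_def
  by (cases "k \<in> Poly_Mapping.keys t") (auto simp: in_keys_iff if_distrib cong: if_cong)

lemma ev_EV: "ev \<phi> f = EV \<phi> f" by (simp add: ev_def EV_def)

lemma lookup_qsmult[simp]: "Poly_Mapping.lookup (qsmult c f) a = c * Poly_Mapping.lookup f a"
  unfolding qsmult_def lookup_sum
  by (cases "a \<in> Poly_Mapping.keys f") (auto simp: lookup_single when_def in_keys_iff)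

lemma lookup_lin: "Poly_Mapping.lookup (lin F f) b = EV (\<lambda>a. Poly_Mapping.lookup (F a) b) f"
  by (simp add: lin_def lookup_sum EV_def)

lemma lookup_coprod: "Poly_Mapping.lookup (coprod f) (u, v) = Poly_Mapping.lookup f (u @ v)"
proof -
  have "Poly_Mapping.lookup (coprod f) (u, v) =
     (\<Sum>a\<in>Poly_Mapping.keys f. \<Sum>i\<le>length a. (if take i a = u \<and> drop i a = v then Poly_Mapping.lookup f a else 0))"
    by (simp add: coprod_def lookup_sum lookup_single when_def eq_commute)
  also have "\<dots> = (\<Sum>a\<in>Poly_Mapping.keys f. if a = u @ v then Poly_Mapping.lookup f a else 0)"
  proof (rule sum.cong[OF refl])
    fix a
    show "(\<Sum>i\<le>length a. (if take i a = u \<and> drop i a = v then Poly_Mapping.lookup f a else 0)) =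
          (if a = u @ v then Poly_Mapping.lookup f a else 0)"
    proof (cases "a = u @ v")
      case True
      have "(\<Sum>i\<le>length a. (if take i a = u \<and> drop i a = v then Poly_Mapping.lookup f a else 0))
          = (\<Sum>i\<in>{length u}. (if take i a = u \<and> drop i a = v then Poly_Mapping.lookup f a else 0))"
        by (rule sum.mono_neutral_right) (use True in \<open>auto simp del: take_append drop_append dest!: arg_cong[where f=length]\<close>)
      then show ?thesis using True by simp
    next
      case False
      then show ?thesis by (auto intro!: sum.neutral)
    qed
  qed
  also have "\<dots> = Poly_Mapping.lookup f (u @ v)"
    by (cases "u @ v \<in> Poly_Mapping.keys f") (auto simp: in_keys_iff)
  finally show ?thesis .
qed

lemma EV_coprod: "EV h (coprod f) = EV (\<lambda>a. \<Sum>i\<le>length a. h (take i a, drop i a)) f"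
  unfolding coprod_def EV_sum EV_single by (simp add: EV_def sum_distrib_left ac_simps)

lemma sum_if_eq2:
  assumes "finite X" "finite Y"
  shows "(\<Sum>b\<in>X. \<Sum>c\<in>Y. if b = u \<and> c = v then F b c else (0::'a::comm_monoid_add)) = (if u \<in> X \<and> v \<in> Y then F u v else 0)"
proof -
  have "(\<Sum>b\<in>X. \<Sum>c\<in>Y. if b = u \<and> c = v then F b c else 0) = (\<Sum>b\<in>X. if b = u then (if v \<in> Y then F u v else 0) else 0)"
    by (rule sum.cong[OF refl]) (auto simp: sum.delta' assms cong: if_cong)
  also have "\<dots> = (if u \<in> X \<and> v \<in> Y then F u v else 0)"
    by (simp add: sum.delta' assms)
  finally show ?thesis .
qed

lemma lookup_tensor: "Poly_Mapping.lookup (tensor x y) (u, v) = Poly_Mapping.lookup x u * Poly_Mapping.lookup y v"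
proof -
  have "Poly_Mapping.lookup (tensor x y) (u, v) = (\<Sum>b\<in>Poly_Mapping.keys x. \<Sum>c\<in>Poly_Mapping.keys y.
      if b = u \<and> c = v then Poly_Mapping.lookup x b * Poly_Mapping.lookup y c else 0)"
    by (simp add: tensor_def lookup_sum lookup_single when_def)
  also have "\<dots> = Poly_Mapping.lookup x u * Poly_Mapping.lookup y v"
    by (subst sum_if_eq2) (auto simp: in_keys_iff)
  finally show ?thesis .
qed

lemma EV_tensor: "EV (\<lambda>p. \<alpha> (fst p) * \<beta> (snd p)) (tensor x y) = EV \<alpha> x * EV \<beta> y"
  unfolding tensor_def EV_sum EV_single by (simp add: EV_def sum_product ac_simps)

lemma lookup_map_mult: "Poly_Mapping.lookup (Poly_Mapping.map ((*) c) t) k = c * Poly_Mapping.lookup t k"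
  for c :: "'k::field"
  by (simp add: Poly_Mapping.map.rep_eq when_def)

lemma EV_map_mult: "EV h (Poly_Mapping.map ((*) c) t) = c * EV h t" for c :: "'k::field"
proof -
  have "EV h (Poly_Mapping.map ((*) c) t) = (\<Sum>p\<in>Poly_Mapping.keys t. Poly_Mapping.lookup (Poly_Mapping.map ((*) c) t) p * h p)"
    by (rule EV_superset) (auto simp: in_keys_iff lookup_map_mult)
  then show ?thesis by (simp add: lookup_map_mult EV_def sum_distrib_left ac_simps)
qed

lemma lookup_tensor_map: "Poly_Mapping.lookup (tensor_map F t) (u, v) =
   EV (\<lambda>p. Poly_Mapping.lookup (F (fst p)) u * Poly_Mapping.lookup (F (snd p)) v) t"
  by (simp add: tensor_map_def lookup_sum lookup_map_mult lookup_tensor EV_def)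

lemma lookup_hcomp: "Poly_Mapping.lookup (hcomp n f) a = (if sum_list a = n then Poly_Mapping.lookup f a else 0)"
  unfolding hcomp_def lookup_sum
  by (cases "a \<in> Poly_Mapping.keys f") (auto simp: lookup_single when_def in_keys_iff)

lemma lookup_sum_list_Mb: "Poly_Mapping.lookup (sum_list (map Mb l) :: 'k::field qsym) c = of_nat (count_list l c)"
  by (induction l) (auto simp: lookup_add lookup_Mb)

lemma lookup_qmult: "Poly_Mapping.lookup (qmult f g) c =
   EV (\<lambda>a. EV (\<lambda>b. of_nat (count_list (qsh a b) c)) g) f"
  by (simp add: qmult_def lookup_sum lookup_sum_list_Mb EV_def sum_distrib_left ac_simps)

lemma counit_lookup: "counit f = Poly_Mapping.lookup f []" by (simp add: counit_def)


definition cv :: "(nat list \<Rightarrow> 'k::field) \<Rightarrow> (nat list \<Rightarrow> 'k) \<Rightarrow> nat list \<Rightarrow> 'k" where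
  "cv \<phi> \<psi> a = (\<Sum>i\<le>length a. \<phi> (take i a) * \<psi> (drop i a))"

definition RR :: "(nat list \<Rightarrow> 'k::field) \<Rightarrow> nat list \<Rightarrow> 'k" where
  "RR g a = (if is_comp a then g a else 0)"

lemma is_comp_take: "is_comp a \<Longrightarrow> is_comp (take i a)"
  by (auto simp: is_comp_def dest: in_set_takeD)
lemma is_comp_drop: "is_comp a \<Longrightarrow> is_comp (drop i a)"
  by (auto simp: is_comp_def dest: in_set_dropD)
lemma is_comp_append[simp]: "is_comp (a @ b) \<longleftrightarrow> is_comp a \<and> is_comp b"
  by (auto simp: is_comp_def)
lemma is_comp_Nil[simp]: "is_comp []" by (simp add: is_comp_def)
lemma is_comp_Cons[simp]: "is_comp (x # a) \<longleftrightarrow> 0 < x \<and> is_comp a" by (simp add: is_comp_def)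
lemma is_comp_take_drop: "is_comp (take i a) \<Longrightarrow> is_comp (drop i a) \<Longrightarrow> is_comp a"
  by (metis append_take_drop_id is_comp_append)

lemma LF_iff: "\<phi> \<in> LF \<longleftrightarrow> RR \<phi> = \<phi>"
  by (auto simp: LF_def RR_def fun_eq_iff)

lemma LF_RR[simp]: "RR g \<in> LF" by (simp add: LF_def RR_def)
lemma LF_D: "\<phi> \<in> LF \<Longrightarrow> \<not> is_comp a \<Longrightarrow> \<phi> a = 0" by (simp add: LF_def)

lemma conv_RR: "conv \<phi> \<psi> = RR (cv \<phi> \<psi>)"
  by (simp add: conv_def RR_def cv_def fun_eq_iff)

lemma cv_RR_comp: "is_comp a \<Longrightarrow> cv (RR \<phi>) (RR \<psi>) a = cv \<phi> \<psi> a"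
  by (simp add: cv_def RR_def is_comp_take is_comp_drop)

lemma cv_LF: "\<phi> \<in> LF \<Longrightarrow> \<psi> \<in> LF \<Longrightarrow> cv \<phi> \<psi> \<in> LF"
  unfolding LF_def cv_def
  by (auto intro!: sum.neutral) (meson is_comp_take_drop)

lemma conv_cv: "\<phi> \<in> LF \<Longrightarrow> \<psi> \<in> LF \<Longrightarrow> conv \<phi> \<psi> = cv \<phi> \<psi>"
  using cv_LF LF_iff conv_RR by metis

lemma conv_LF[simp]: "conv \<phi> \<psi> \<in> LF" by (simp add: conv_RR)

lemma eps_LF[simp]: "eps \<in> LF" by (simp add: LF_def eps_def)

lemma sum_triangle:
  "(\<Sum>i\<le>n. \<Sum>j\<le>i. f j i) = (\<Sum>j\<le>n. \<Sum>k\<le>n - j. f j (j + k))" for n :: nat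
proof (induction n)
  case 0 then show ?case by simp
next
  case (Suc n)
  have "(\<Sum>j\<le>Suc n. \<Sum>k\<le>Suc n - j. f j (j + k)) =
        (\<Sum>j\<le>n. \<Sum>k\<le>Suc n - j. f j (j + k)) + f (Suc n) (Suc n)"
    by simp
  also have "(\<Sum>j\<le>n. \<Sum>k\<le>Suc n - j. f j (j + k)) = (\<Sum>j\<le>n. (\<Sum>k\<le>n - j. f j (j + k)) + f j (Suc n))"
  proof (rule sum.cong[OF refl])
    fix j assume "j \<in> {..n}"
    then have "Suc n - j = Suc (n - j)" by auto
    then show "(\<Sum>k\<le>Suc n - j. f j (j + k)) = (\<Sum>k\<le>n - j. f j (j + k)) + f j (Suc n)"
      using \<open>j \<in> {..n}\<close> by simp
  qed
  finally show ?case using Suc by (simp add: sum.distrib add.assoc)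
qed

lemma cv_assoc: "cv (cv \<phi> \<psi>) \<chi> = cv \<phi> (cv \<psi> \<chi>)"
proof
  fix a :: "nat list"
  let ?n = "length a"
  have "cv (cv \<phi> \<psi>) \<chi> a = (\<Sum>i\<le>?n. \<Sum>j\<le>i. \<phi> (take j a) * \<psi> (drop j (take i a)) * \<chi> (drop i a))"
    unfolding cv_def by (rule sum.cong[OF refl]) (auto simp: sum_distrib_right min_def)
  also have "\<dots> = (\<Sum>j\<le>?n. \<Sum>k\<le>?n - j. \<phi> (take j a) * \<psi> (drop j (take (j + k) a)) * \<chi> (drop (j + k) a))"
    by (rule sum_triangle)
  also have "\<dots> = cv \<phi> (cv \<psi> \<chi>) a"
    unfolding cv_def by (rule sum.cong[OF refl]) (auto simp: sum_distrib_left take_drop add.commute mult.assoc)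
  finally show "cv (cv \<phi> \<psi>) \<chi> a = cv \<phi> (cv \<psi> \<chi>) a" .
qed

lemma sum_atMost_split0: "(\<Sum>i\<le>n. g i) = g 0 + (\<Sum>i\<in>{1..n}. g i)" for n :: nat
proof -
  have "{..n} = insert 0 {1..n}" by auto
  then show ?thesis by simp
qed

lemma sum_atMost_splitn: "(\<Sum>i\<le>n. g i) = (\<Sum>i<n. g i) + g n" for n :: nat
  by (simp add: lessThan_Suc_atMost[symmetric])

lemma cv_eps_left: "cv eps \<phi> = \<phi>"
proof
  fix a :: "nat list"
  show "cv eps \<phi> a = \<phi> a"
    unfolding cv_def eps_def
    by (subst sum_atMost_split0) (auto intro!: sum.neutral)
qed

lemma cv_eps_right: "cv \<phi> eps = \<phi>"
proof
  fix a :: "nat list"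
  show "cv \<phi> eps a = \<phi> a"
    unfolding cv_def eps_def
    by (subst sum_atMost_splitn) (auto intro!: sum.neutral)
qed

lemma conv_assoc: "\<phi> \<in> LF \<Longrightarrow> \<psi> \<in> LF \<Longrightarrow> \<chi> \<in> LF \<Longrightarrow> conv (conv \<phi> \<psi>) \<chi> = conv \<phi> (conv \<psi> \<chi>)"
  by (simp add: conv_cv cv_LF cv_assoc)

lemma conv_eps_left[simp]: "\<phi> \<in> LF \<Longrightarrow> conv eps \<phi> = \<phi>"
  by (simp add: conv_cv cv_eps_left)
lemma conv_eps_right[simp]: "\<phi> \<in> LF \<Longrightarrow> conv \<phi> eps = \<phi>"
  by (simp add: conv_cv cv_eps_right)

lemma cv_Nil[simp]: "cv \<phi> \<psi> [] = \<phi> [] * \<psi> []" by (simp add: cv_def)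
lemma conv_Nil[simp]: "conv \<phi> \<psi> [] = \<phi> [] * \<psi> []" by (simp add: conv_def)
lemma eps_Nil[simp]: "eps [] = 1" by (simp add: eps_def)

function rinv :: "(nat list \<Rightarrow> 'k::field) \<Rightarrow> nat list \<Rightarrow> 'k" where
  "rinv \<phi> a = (if a = [] then 1 else - (\<Sum>i\<in>{1..length a}. \<phi> (take i a) * rinv \<phi> (drop i a)))"
  by auto
termination by (relation "measure (\<lambda>(\<phi>, a). length a)") auto

function linv :: "(nat list \<Rightarrow> 'k::field) \<Rightarrow> nat list \<Rightarrow> 'k" where
  "linv \<phi> a = (if a = [] then 1 else - (\<Sum>i\<in>{0..<length a}. linv \<phi> (take i a) * \<phi> (drop i a)))"
  by auto
termination by (relation "measure (\<lambda>(\<phi>, a). length a)") auto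

declare rinv.simps[simp del] linv.simps[simp del]

lemma cv_rinv: "\<phi> [] = 1 \<Longrightarrow> cv \<phi> (rinv \<phi>) = eps"
proof
  fix a assume h: "\<phi> [] = 1"
  show "cv \<phi> (rinv \<phi>) a = eps a"
  proof (cases "a = []")
    case True then show ?thesis by (simp add: h rinv.simps)
  next
    case False
    then show ?thesis unfolding cv_def
      by (subst sum_atMost_split0) (simp add: h eps_def rinv.simps[of \<phi> a])
  qed
qed

lemma cv_linv: "\<phi> [] = 1 \<Longrightarrow> cv (linv \<phi>) \<phi> = eps"
proof
  fix a assume h: "\<phi> [] = 1"
  show "cv (linv \<phi>) \<phi> a = eps a"
  proof (cases "a = []")
    case True then show ?thesis by (simp add: h linv.simps)
  next
    case False
    then show ?thesis unfolding cv_def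
      by (subst sum_atMost_splitn) (simp add: h eps_def linv.simps[of \<phi> a] atLeast0LessThan)
  qed
qed

lemma RR_eps: "RR eps = eps" by (simp add: RR_def eps_def fun_eq_iff)

lemma conv_RR_right: "conv \<phi> (RR g) = RR (cv \<phi> g)"
  by (simp add: conv_def RR_def cv_def fun_eq_iff is_comp_drop)
lemma conv_RR_left: "conv (RR g) \<phi> = RR (cv g \<phi>)"
  by (simp add: conv_def RR_def cv_def fun_eq_iff is_comp_take)

definition grp :: "(nat list \<Rightarrow> 'k::field) \<Rightarrow> bool" where
  "grp \<phi> \<longleftrightarrow> \<phi> \<in> LF \<and> \<phi> [] = 1"

lemma inv_unique:
  assumes "\<phi> \<in> LF" "\<psi> \<in> LF" "\<chi> \<in> LF" "conv \<phi> \<psi> = eps" "conv \<chi> \<phi> = eps"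
  shows "\<psi> = \<chi>"
  by (metis assms conv_assoc conv_eps_left conv_eps_right)

lemma cinv_props:
  assumes "grp \<phi>"
  shows "cinv \<phi> \<in> LF \<and> conv \<phi> (cinv \<phi>) = eps \<and> conv (cinv \<phi>) \<phi> = eps"
proof -
  have L: "\<phi> \<in> LF" and one: "\<phi> [] = 1" using assms by (auto simp: grp_def)
  have r: "conv \<phi> (RR (rinv \<phi>)) = eps" by (simp add: conv_RR_right cv_rinv one RR_eps)
  have l: "conv (RR (linv \<phi>)) \<phi> = eps" by (simp add: conv_RR_left cv_linv one RR_eps)
  have eq: "RR (rinv \<phi>) = RR (linv \<phi>)" by (rule inv_unique[OF L _ _ r l]) auto
  have ex: "\<exists>\<psi>. \<psi> \<in> LF \<and> conv \<phi> \<psi> = eps \<and> conv \<psi> \<phi> = eps"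
    using r l eq by (intro exI[of _ "RR (rinv \<phi>)"]) auto
  have "\<exists>!\<psi>. \<psi> \<in> LF \<and> conv \<phi> \<psi> = eps \<and> conv \<psi> \<phi> = eps"
    using ex inv_unique[OF L] by blast
  then show ?thesis unfolding cinv_def by (rule theI')
qed

lemma cinv_LF[simp]: "grp \<phi> \<Longrightarrow> cinv \<phi> \<in> LF" using cinv_props by blast
lemma conv_cinv_right[simp]: "grp \<phi> \<Longrightarrow> conv \<phi> (cinv \<phi>) = eps" using cinv_props by blast
lemma conv_cinv_left[simp]: "grp \<phi> \<Longrightarrow> conv (cinv \<phi>) \<phi> = eps" using cinv_props by blast

lemma cinv_eqI:
  assumes "grp \<phi>" "\<psi> \<in> LF" "conv \<phi> \<psi> = eps"
  shows "cinv \<phi> = \<psi>"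
  by (metis assms inv_unique cinv_props grp_def)

lemma cinv_eqI_left:
  assumes "grp \<phi>" "\<psi> \<in> LF" "conv \<psi> \<phi> = eps"
  shows "cinv \<phi> = \<psi>"
  by (metis assms inv_unique cinv_props grp_def)

lemma grp_LF: "grp \<phi> \<Longrightarrow> \<phi> \<in> LF" by (simp add: grp_def)

lemma cinv_Nil: "grp \<phi> \<Longrightarrow> cinv \<phi> [] = 1"
proof -
  assume g: "grp \<phi>"
  have "conv \<phi> (cinv \<phi>) [] = 1" using conv_cinv_right[OF g] by simp
  then show ?thesis using g by (simp add: grp_def)
qed

lemma grp_cinv[simp]: "grp \<phi> \<Longrightarrow> grp (cinv \<phi>)" by (metis cinv_LF cinv_Nil grp_def)
lemma grp_conv[simp]: "grp \<phi> \<Longrightarrow> grp \<psi> \<Longrightarrow> grp (conv \<phi> \<psi>)" by (simp add: grp_def)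
lemma grp_eps[simp]: "grp eps" by (simp add: grp_def)

lemma cinv_cinv[simp]: "grp \<phi> \<Longrightarrow> cinv (cinv \<phi>) = \<phi>"
  by (rule cinv_eqI) (simp_all add: grp_LF)

lemma cinv_conv: "grp \<phi> \<Longrightarrow> grp \<psi> \<Longrightarrow> cinv (conv \<phi> \<psi>) = conv (cinv \<psi>) (cinv \<phi>)"
proof (rule cinv_eqI)
  assume g: "grp \<phi>" "grp \<psi>"
  show "conv (conv \<phi> \<psi>) (conv (cinv \<psi>) (cinv \<phi>)) = eps"
    using g by (simp add: conv_assoc grp_LF flip: conv_assoc[of \<psi>])
qed auto

lemma cinv_eps[simp]: "cinv eps = eps" by (rule cinv_eqI) auto

lemma cbar_LF[simp]: "\<phi> \<in> LF \<Longrightarrow> cbar \<phi> \<in> LF" by (simp add: LF_def cbar_def)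
lemma cbar_Nil[simp]: "cbar \<phi> [] = \<phi> []" by (simp add: cbar_def)
lemma grp_cbar[simp]: "grp \<phi> \<Longrightarrow> grp (cbar \<phi>)" by (simp add: grp_def)
lemma cbar_cbar[simp]: "cbar (cbar \<phi>) = \<phi>"
  by (simp add: cbar_def fun_eq_iff power_mult_distrib[symmetric])
lemma cbar_eps[simp]: "cbar eps = eps" by (simp add: cbar_def eps_def fun_eq_iff)

lemma sum_list_take_drop: "sum_list (take i a) + sum_list (drop i a) = sum_list a"
  by (metis append_take_drop_id sum_list_append)

lemma cbar_conv: "cbar (conv \<phi> \<psi>) = conv (cbar \<phi>) (cbar \<psi>)"
proof
  fix a :: "nat list"
  have "\<And>i. (-1::'a) ^ sum_list a = (-1) ^ sum_list (take i a) * (-1) ^ sum_list (drop i a)"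
    by (metis power_add sum_list_take_drop)
  then show "cbar (conv \<phi> \<psi>) a = conv (cbar \<phi>) (cbar \<psi>) a"
    by (simp add: cbar_def conv_def sum_distrib_left ac_simps)
qed

lemma cbar_cinv: "grp \<phi> \<Longrightarrow> cbar (cinv \<phi>) = cinv (cbar \<phi>)"
  by (rule cinv_eqI[symmetric]) (auto simp flip: cbar_conv)


lemma qsh_Nil_right[simp]: "qsh a [] = [a]"
  by (cases a) auto

lemma qsh_set_comp: "c \<in> set (qsh a b) \<Longrightarrow> is_comp a \<Longrightarrow> is_comp b \<Longrightarrow> is_comp c"
  by (induction a b arbitrary: c rule: qsh.induct) auto

lemma qsh_set_sum: "c \<in> set (qsh a b) \<Longrightarrow> sum_list c = sum_list a + sum_list b"
  by (induction a b arbitrary: c rule: qsh.induct) auto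

lemma qsh_set_len: "c \<in> set (qsh a b) \<Longrightarrow> length a \<le> length c \<and> length b \<le> length c"
  by (induction a b arbitrary: c rule: qsh.induct) force+

lemma qsh_Nil_mem: "[] \<in> set (qsh a b) \<longleftrightarrow> a = [] \<and> b = []"
  by (induction a b rule: qsh.induct) auto

lemma Lk: "(\<Sum>k\<le>length (z # c). G (take k (z # c)) (drop k (z # c))) =
   G [] (z # c) + (\<Sum>k\<le>length c. G (z # take k c) (drop k c))"
  for G :: "nat list \<Rightarrow> nat list \<Rightarrow> 'b::comm_monoid_add"
  by (simp only: length_Cons sum.atMost_Suc_shift) simp

lemma sum_list_map_add: "(\<Sum>c\<leftarrow>l. f c + g c) = (\<Sum>c\<leftarrow>l. f c) + (\<Sum>c\<leftarrow>l. g c)"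
  for f :: "'a \<Rightarrow> 'b::comm_monoid_add"
  by (induction l) (auto simp: ac_simps)

lemma bialg:
  fixes G :: "nat list \<Rightarrow> nat list \<Rightarrow> 'b::comm_monoid_add"
  shows "(\<Sum>c\<leftarrow>qsh a b. \<Sum>k\<le>length c. G (take k c) (drop k c)) =
    (\<Sum>i\<le>length a. \<Sum>j\<le>length b. \<Sum>u\<leftarrow>qsh (take i a) (take j b). \<Sum>v\<leftarrow>qsh (drop i a) (drop j b). G u v)"
proof (induction a b arbitrary: G rule: qsh.induct)
  case (1 b) then show ?case by simp
next
  case (2 v va) then show ?case by simp
next
  case (3 x a y b)
  let ?S = "\<lambda>a b G. (\<Sum>i\<le>length a. \<Sum>j\<le>length b. \<Sum>u\<leftarrow>qsh (take i a) (take j b). \<Sum>v\<leftarrow>qsh (drop i a) (drop j b). (G u v :: 'b))"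
  have L: "(\<Sum>c\<leftarrow>qsh (x # a) (y # b). \<Sum>k\<le>length c. G (take k c) (drop k c)) =
     (\<Sum>c\<leftarrow>qsh (x # a) (y # b). G [] c) + ?S a (y # b) (\<lambda>u v. G (x # u) v)
       + ?S (x # a) b (\<lambda>u v. G (y # u) v) + ?S a b (\<lambda>u v. G ((x + y) # u) v)"
  proof -
    have e: "\<And>z l. (\<Sum>c\<leftarrow>map ((#) z) l. \<Sum>k\<le>length c. G (take k c) (drop k c)) =
       (\<Sum>c\<leftarrow>map ((#) z) l. G [] c) + (\<Sum>c\<leftarrow>l. \<Sum>k\<le>length c. G (z # take k c) (drop k c))"
      by (simp only: map_map comp_def Lk sum_list_map_add)
    show ?thesis
      by (simp only: qsh.simps map_append sum_list_append e 3(1)[of "\<lambda>u v. G (x # u) v"]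
            3(2)[of "\<lambda>u v. G (y # u) v"] 3(3)[of "\<lambda>u v. G ((x+y) # u) v"]) (simp only: ac_simps)
  qed
  have R1: "?S a (y # b) (\<lambda>u v. G (x # u) v) =
     (\<Sum>i\<le>length a. (\<Sum>v\<leftarrow>qsh (drop i a) (y # b). G (x # take i a) v) +
       (\<Sum>j\<le>length b. \<Sum>u\<leftarrow>qsh (take i a) (y # take j b). \<Sum>v\<leftarrow>qsh (drop i a) (drop j b). G (x # u) v))"
    by (simp only: length_Cons sum.atMost_Suc_shift) simp
  have R2: "?S (x # a) b (\<lambda>u v. G (y # u) v) =
     (\<Sum>j\<le>length b. \<Sum>v\<leftarrow>qsh (x # a) (drop j b). G (y # take j b) v) +
     (\<Sum>i\<le>length a. \<Sum>j\<le>length b. \<Sum>u\<leftarrow>qsh (x # take i a) (take j b). \<Sum>v\<leftarrow>qsh (drop i a) (drop j b). G (y # u) v)"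
    by (simp only: length_Cons sum.atMost_Suc_shift) simp
  have R: "?S (x # a) (y # b) G =
     (\<Sum>c\<leftarrow>qsh (x # a) (y # b). G [] c) +
     (\<Sum>j\<le>length b. \<Sum>v\<leftarrow>qsh (x # a) (drop j b). G (y # take j b) v) +
     ((\<Sum>i\<le>length a. \<Sum>v\<leftarrow>qsh (drop i a) (y # b). G (x # take i a) v) +
     (\<Sum>i\<le>length a. \<Sum>j\<le>length b.
        (\<Sum>u\<leftarrow>qsh (take i a) (y # take j b). \<Sum>v\<leftarrow>qsh (drop i a) (drop j b). G (x # u) v) +
        (\<Sum>u\<leftarrow>qsh (x # take i a) (take j b). \<Sum>v\<leftarrow>qsh (drop i a) (drop j b). G (y # u) v) +
        (\<Sum>u\<leftarrow>qsh (take i a) (take j b). \<Sum>v\<leftarrow>qsh (drop i a) (drop j b). G ((x + y) # u) v)))"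
    by (simp only: length_Cons sum.atMost_Suc_shift) (simp add: sum.distrib comp_def ac_simps)
  show ?case
    unfolding L R R1 R2 by (simp add: sum.distrib ac_simps)
qed


lemma EV_sum_list: "EV h (sum_list l) = (\<Sum>t\<leftarrow>l. EV h t)"
  by (induction l) (auto simp: EV_add)

lemma EV_qsmult: "EV h (qsmult c f) = c * EV h f"
  unfolding qsmult_def EV_sum EV_single by (simp add: EV_def sum_distrib_left ac_simps)

lemma ev_qmult_Mb: "ev \<phi> (qmult (Mb a) (Mb b) :: 'k::field qsym) = (\<Sum>c\<leftarrow>qsh a b. \<phi> c)"
  by (simp add: ev_EV qmult_def EV_qsmult EV_sum_list lookup_Mb Mb_def comp_def)

lemma char_iff: "is_character \<phi> \<longleftrightarrow> grp \<phi> \<and>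
   (\<forall>a b. is_comp a \<longrightarrow> is_comp b \<longrightarrow> (\<Sum>c\<leftarrow>qsh a b. \<phi> c) = \<phi> a * \<phi> b)"
  by (simp add: is_character_def grp_def ev_qmult_Mb)

lemma char_grp: "is_character \<phi> \<Longrightarrow> grp \<phi>" by (simp add: char_iff)
lemma char_mult: "is_character \<phi> \<Longrightarrow> is_comp a \<Longrightarrow> is_comp b \<Longrightarrow> (\<Sum>c\<leftarrow>qsh a b. \<phi> c) = \<phi> a * \<phi> b"
  by (simp add: char_iff)

lemma sum_list_prod2: "(\<Sum>u\<leftarrow>l1. \<Sum>v\<leftarrow>l2. f u * g v) = (\<Sum>u\<leftarrow>l1. f u) * (\<Sum>v\<leftarrow>l2. (g v :: 'a::comm_semiring_1))"
  by (simp add: sum_list_const_mult sum_list_mult_const)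

lemma sum_list_cong_set: "(\<And>x. x \<in> set l \<Longrightarrow> f x = g x) \<Longrightarrow> (\<Sum>x\<leftarrow>l. f x) = (\<Sum>x\<leftarrow>l. g x)"
  by (metis map_eq_conv)

lemma bialg_prod:
  assumes "is_comp a" "is_comp b"
  shows "(\<Sum>c\<leftarrow>qsh a b. cv \<alpha> \<beta> c) =
    (\<Sum>i\<le>length a. \<Sum>j\<le>length b. (\<Sum>u\<leftarrow>qsh (take i a) (take j b). \<alpha> u) * (\<Sum>v\<leftarrow>qsh (drop i a) (drop j b). \<beta> v))"
  unfolding cv_def bialg[of "\<lambda>u v. \<alpha> u * \<beta> v"] sum_list_prod2 ..

lemma char_conv:
  assumes "is_character \<phi>" "is_character \<psi>"
  shows "is_character (conv \<phi> \<psi>)"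
proof -
  have g: "grp (conv \<phi> \<psi>)" using assms by (simp add: char_grp)
  have "(\<Sum>c\<leftarrow>qsh a b. conv \<phi> \<psi> c) = conv \<phi> \<psi> a * conv \<phi> \<psi> b" if ab: "is_comp a" "is_comp b" for a b
  proof -
    have "(\<Sum>c\<leftarrow>qsh a b. conv \<phi> \<psi> c) = (\<Sum>c\<leftarrow>qsh a b. cv \<phi> \<psi> c)"
      using assms by (simp add: conv_cv char_grp grp_LF)
    also have "\<dots> = (\<Sum>i\<le>length a. \<Sum>j\<le>length b. (\<phi> (take i a) * \<phi> (take j b)) * (\<psi> (drop i a) * \<psi> (drop j b)))"
      unfolding bialg_prod[OF ab]
      by (simp add: char_mult[OF assms(1)] char_mult[OF assms(2)] is_comp_take is_comp_drop ab)
    also have "\<dots> = cv \<phi> \<psi> a * cv \<phi> \<psi> b"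
      by (simp add: cv_def sum_product ac_simps)
    also have "\<dots> = conv \<phi> \<psi> a * conv \<phi> \<psi> b"
      using assms by (simp add: conv_cv char_grp grp_LF)
    finally show ?thesis .
  qed
  then show ?thesis using g by (simp add: char_iff)
qed

lemma char_cbar:
  assumes "is_character \<phi>"
  shows "is_character (cbar \<phi>)"
proof -
  have "(\<Sum>c\<leftarrow>qsh a b. cbar \<phi> c) = cbar \<phi> a * cbar \<phi> b" if ab: "is_comp a" "is_comp b" for a b
  proof -
    have "(\<Sum>c\<leftarrow>qsh a b. cbar \<phi> c) = (\<Sum>c\<leftarrow>qsh a b. (-1) ^ (sum_list a + sum_list b) * \<phi> c)"
      unfolding cbar_def by (rule sum_list_cong_set) (simp add: qsh_set_sum)
    also have "\<dots> = cbar \<phi> a * cbar \<phi> b"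
      by (simp add: sum_list_const_mult char_mult[OF assms ab] cbar_def power_add)
    finally show ?thesis .
  qed
  then show ?thesis using assms by (simp add: char_iff char_grp)
qed

lemma sum_diff_on:
  fixes f g :: "'a \<Rightarrow> 'b::ab_group_add"
  assumes "finite S" "E \<subseteq> S" "\<And>p. p \<in> S - E \<Longrightarrow> f p = g p"
  shows "sum f S = sum g S + (\<Sum>p\<in>E. f p - g p)"
proof -
  have fE: "finite E" using assms finite_subset by blast
  have "sum f S = sum f E + sum f (S - E)" using assms by (metis add.commute sum.subset_diff)
  moreover have "sum g S = sum g E + sum g (S - E)" using assms by (metis add.commute sum.subset_diff)
  moreover have "sum f (S - E) = sum g (S - E)" using assms by (auto intro: sum.cong)
  ultimately show ?thesis by (simp add: sum_subtractf)
qed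

lemma sum2_diff_on:
  fixes f g :: "nat \<Rightarrow> nat \<Rightarrow> 'b::ab_group_add"
  assumes "E \<subseteq> {..n} \<times> {..m}" "\<And>i j. i \<le> n \<Longrightarrow> j \<le> m \<Longrightarrow> (i, j) \<notin> E \<Longrightarrow> f i j = g i j"
  shows "(\<Sum>i\<le>n. \<Sum>j\<le>m. f i j) = (\<Sum>i\<le>n. \<Sum>j\<le>m. g i j) + (\<Sum>(i,j)\<in>E. f i j - g i j)"
  unfolding sum.cartesian_product
  by (subst sum_diff_on[of _ E]) (use assms in \<open>auto simp: case_prod_beta\<close>)

lemma eps_qsh: "(\<Sum>c\<leftarrow>qsh a b. eps c) = eps a * (eps b :: 'k::field)"
proof (cases "a = [] \<and> b = []")
  case True then show ?thesis by simp
next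
  case False
  then have "(\<Sum>c\<leftarrow>qsh a b. eps c) = (\<Sum>c\<leftarrow>qsh a b. (0::'k))"
    by (intro sum_list_cong_set) (auto simp: eps_def qsh_Nil_mem)
  then show ?thesis using False by (auto simp: eps_def)
qed

lemma char_cinv:
  assumes "is_character \<phi>"
  shows "is_character (cinv \<phi>)"
proof -
  have g: "grp \<phi>" using assms char_grp by blast
  define \<psi> where "\<psi> = cinv \<phi>"
  have gp: "grp \<psi>" unfolding \<psi>_def using g by simp
  have cvc: "cv \<phi> \<psi> = eps" using g gp by (metis \<psi>_def conv_cinv_right conv_cv grp_LF)
  have main: "\<And>a b. length a + length b = N \<Longrightarrow> is_comp a \<Longrightarrow> is_comp b \<Longrightarrow> (\<Sum>c\<leftarrow>qsh a b. \<psi> c) = \<psi> a * \<psi> b" for N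
  proof (induction N rule: less_induct)
    case (less N)
    fix a b assume N: "length a + length b = N" and ab: "is_comp a" "is_comp b"
    let ?S = "\<lambda>x y. (\<Sum>v\<leftarrow>qsh x y. \<psi> v)"
    have IH: "?S (drop i a) (drop j b) = \<psi> (drop i a) * \<psi> (drop j b)"
      if "i \<le> length a" "j \<le> length b" "(i, j) \<noteq> (0, 0)" for i j
      by (rule less(1)[OF _ refl]) (use that N ab in \<open>auto simp: is_comp_drop\<close>)
    have "eps a * eps b = (\<Sum>c\<leftarrow>qsh a b. cv \<phi> \<psi> c)" by (simp add: cvc eps_qsh)
    also have "\<dots> = (\<Sum>i\<le>length a. \<Sum>j\<le>length b. (\<phi> (take i a) * \<phi> (take j b)) * ?S (drop i a) (drop j b))"
      unfolding bialg_prod[OF ab] by (simp add: char_mult[OF assms] is_comp_take ab)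
    also have "\<dots> = (\<Sum>i\<le>length a. \<Sum>j\<le>length b. (\<phi> (take i a) * \<phi> (take j b)) * (\<psi> (drop i a) * \<psi> (drop j b)))
       + (\<Sum>(i,j)\<in>{(0,0)}. (\<phi> (take i a) * \<phi> (take j b)) * ?S (drop i a) (drop j b) -
              (\<phi> (take i a) * \<phi> (take j b)) * (\<psi> (drop i a) * \<psi> (drop j b)))"
      by (rule sum2_diff_on) (auto simp: IH)
    also have "\<dots> = cv \<phi> \<psi> a * cv \<phi> \<psi> b + (?S a b - \<psi> a * \<psi> b)"
      using g by (simp add: cv_def sum_product ac_simps grp_def)
    finally show "?S a b = \<psi> a * \<psi> b" by (simp add: cvc)
  qed
  show ?thesis unfolding char_iff using gp main \<psi>_def by blast
qed

lemma zetaQ_LF: "zetaQ \<in> LF" by (simp add: LF_def zetaQ_def)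
lemma zetaQ_grp[simp]: "grp zetaQ" by (simp add: grp_def zetaQ_LF zetaQ_def)

lemma zetaQ_char: "is_character (zetaQ :: nat list \<Rightarrow> 'k::field)"
proof -
  have "(\<Sum>c\<leftarrow>qsh a b. (zetaQ c :: 'k)) = zetaQ a * zetaQ b" if ab: "is_comp a" "is_comp b" for a b
  proof (cases a)
    case Nil then show ?thesis by (simp add: zetaQ_def)
  next
    case (Cons x a')
    show ?thesis
    proof (cases b)
      case Nil then show ?thesis by (simp add: zetaQ_def)
    next
      case (Cons y b')
      show ?thesis
      proof (cases "a' = [] \<and> b' = []")
        case True then show ?thesis using ab \<open>a = x # a'\<close> Cons by (simp add: zetaQ_def)
      next
        case False
        have "(\<Sum>c\<leftarrow>qsh a b. (zetaQ c :: 'k)) = (\<Sum>c\<leftarrow>qsh a b. 0)"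
        proof (rule sum_list_cong_set)
          fix c assume "c \<in> set (qsh a b)"
          then have "length a \<le> length c \<and> length b \<le> length c" by (rule qsh_set_len)
          then have "2 \<le> length c" using False \<open>a = x # a'\<close> Cons by (cases a'; cases b'; auto)
          then show "zetaQ c = 0" by (simp add: zetaQ_def)
        qed
        moreover have "zetaQ a * zetaQ b = (0::'k)" using False \<open>a = x # a'\<close> Cons by (cases a'; cases b'; simp add: zetaQ_def)
        ultimately show ?thesis by (simp only: sum_list_0)
      qed
    qed
  qed
  then show ?thesis by (simp add: char_iff zetaQ_grp)
qed


lemma cv_split:
  assumes "a \<noteq> []"
  shows "cv \<phi> \<psi> a = \<phi> [] * \<psi> a + \<phi> a * \<psi> [] + (\<Sum>i\<in>{1..<length a}. \<phi> (take i a) * \<psi> (drop i a))"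
proof -
  have n: "length a \<ge> 1" using assms by (cases a) auto
  have "{..length a} = insert 0 (insert (length a) {1..<length a})" using n by auto
  moreover have "length a \<noteq> 0" using assms by simp
  ultimately show ?thesis unfolding cv_def using assms by (simp add: ac_simps)
qed

lemma root_unique_cv:
  fixes \<alpha> \<beta> :: "nat list \<Rightarrow> 'k::field"
  assumes two: "(2::'k) \<noteq> 0" and "\<alpha> [] = 1" "\<beta> [] = 1" "cv \<alpha> \<alpha> = cv \<beta> \<beta>"
  shows "\<alpha> = \<beta>"
proof
  fix a :: "nat list"
  show "\<alpha> a = \<beta> a"
  proof (induction "length a" arbitrary: a rule: less_induct)
    case less
    show ?case
    proof (cases "a = []")
      case True then show ?thesis using assms by simp
    next
      case False
      have m: "(\<Sum>i\<in>{1..<length a}. \<alpha> (take i a) * \<alpha> (drop i a)) = (\<Sum>i\<in>{1..<length a}. \<beta> (take i a) * \<beta> (drop i a))"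
        by (rule sum.cong[OF refl]) (auto simp: less)
      have "cv \<alpha> \<alpha> a = cv \<beta> \<beta> a" using assms by simp
      then have "2 * \<alpha> a = 2 * \<beta> a" unfolding cv_split[OF False] m using assms by simp
      then show ?thesis using two by simp
    qed
  qed
qed

lemma root_unique:
  fixes \<alpha> \<beta> :: "nat list \<Rightarrow> 'k::field"
  assumes two: "(2::'k) \<noteq> 0" and "grp \<alpha>" "grp \<beta>" "conv \<alpha> \<alpha> = conv \<beta> \<beta>"
  shows "\<alpha> = \<beta>"
  using assms root_unique_cv[OF two] by (metis conv_cv grp_def)

function sq :: "(nat list \<Rightarrow> 'k::field) \<Rightarrow> nat list \<Rightarrow> 'k" where
  "sq \<theta> a = (if a = [] then 1 else (\<theta> a - (\<Sum>i\<in>{1..<length a}. sq \<theta> (take i a) * sq \<theta> (drop i a))) / 2)"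
  by auto
termination by (relation "measure (\<lambda>(\<theta>, a). length a)") auto
declare sq.simps[simp del]

lemma cv_sq:
  assumes two: "(2::'k::field) \<noteq> 0" and "\<theta> [] = (1::'k)"
  shows "cv (sq \<theta>) (sq \<theta>) = \<theta>"
proof
  fix a :: "nat list"
  show "cv (sq \<theta>) (sq \<theta>) a = \<theta> a"
  proof (cases "a = []")
    case True then show ?thesis using assms by (simp add: sq.simps)
  next
    case False
    have s0: "sq \<theta> [] = 1" by (simp add: sq.simps)
    have "sq \<theta> a = (\<theta> a - (\<Sum>i\<in>{1..<length a}. sq \<theta> (take i a) * sq \<theta> (drop i a))) / 2"
      using False by (simp add: sq.simps[of \<theta> a])
    then have "2 * sq \<theta> a + (\<Sum>i\<in>{1..<length a}. sq \<theta> (take i a) * sq \<theta> (drop i a)) = \<theta> a"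
      using two by (simp add: field_simps)
    then show ?thesis unfolding cv_split[OF False] s0 by simp
  qed
qed

lemma conv_RR_both: "conv (RR g) (RR h) = RR (cv g h)"
  by (auto simp: conv_def RR_def fun_eq_iff cv_def is_comp_take is_comp_drop)

lemma RR_LF: "\<phi> \<in> LF \<Longrightarrow> RR \<phi> = \<phi>" by (simp add: LF_iff)

lemma sqrt_char:
  fixes \<theta> :: "nat list \<Rightarrow> 'k::field"
  assumes two: "(2::'k) \<noteq> 0" and th: "is_character \<theta>"
  defines "\<psi> \<equiv> RR (sq \<theta>)"
  shows "is_character \<psi> \<and> conv \<psi> \<psi> = \<theta>"
proof -
  have gt: "grp \<theta>" using th char_grp by blast
  have sq: "conv \<psi> \<psi> = \<theta>" unfolding \<psi>_def conv_RR_both using gt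
    by (simp add: grp_def RR_LF cv_sq[OF two])
  have gp: "grp \<psi>" unfolding \<psi>_def grp_def by (simp add: RR_def sq.simps)
  have cvq: "cv \<psi> \<psi> = \<theta>" using sq gp by (simp add: conv_cv grp_LF)
  have p0: "\<psi> [] = 1" using gp grp_def by blast
  have main: "\<And>a b. length a + length b = N \<Longrightarrow> is_comp a \<Longrightarrow> is_comp b \<Longrightarrow> (\<Sum>c\<leftarrow>qsh a b. \<psi> c) = \<psi> a * \<psi> b" for N
  proof (induction N rule: less_induct)
    case (less N)
    fix a b assume N: "length a + length b = N" and ab: "is_comp a" "is_comp b"
    let ?S = "\<lambda>x y. (\<Sum>v\<leftarrow>qsh x y. \<psi> v)"
    show "?S a b = \<psi> a * \<psi> b"
    proof (cases "a = [] \<or> b = []")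
      case True then show ?thesis using p0 by auto
    next
      case False
      have IHd: "?S (drop i a) (drop j b) = \<psi> (drop i a) * \<psi> (drop j b)"
        if "i \<le> length a" "j \<le> length b" "(i, j) \<noteq> (0, 0)" for i j
        by (rule less(1)[OF _ refl]) (use that N ab in \<open>auto simp: is_comp_drop\<close>)
      have IHt: "?S (take i a) (take j b) = \<psi> (take i a) * \<psi> (take j b)"
        if "i \<le> length a" "j \<le> length b" "(i, j) \<noteq> (length a, length b)" for i j
        by (rule less(1)[OF _ refl]) (use that N ab in \<open>auto simp: is_comp_take min_def\<close>)
      let ?f = "\<lambda>i j. ?S (take i a) (take j b) * ?S (drop i a) (drop j b)"
      let ?g = "\<lambda>i j. (\<psi> (take i a) * \<psi> (drop i a)) * (\<psi> (take j b) * \<psi> (drop j b))"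
      have ne: "(0::nat, 0::nat) \<noteq> (length a, length b)" using False by auto
      have "\<theta> a * \<theta> b = (\<Sum>c\<leftarrow>qsh a b. cv \<psi> \<psi> c)" using th ab by (simp add: cvq char_mult)
      also have "\<dots> = (\<Sum>i\<le>length a. \<Sum>j\<le>length b. ?f i j)"
        unfolding bialg_prod[OF ab] ..
      also have "\<dots> = (\<Sum>i\<le>length a. \<Sum>j\<le>length b. ?g i j) + (\<Sum>(i,j)\<in>{(0,0), (length a, length b)}. ?f i j - ?g i j)"
        by (rule sum2_diff_on) (auto simp: IHd IHt ac_simps)
      also have "\<dots> = cv \<psi> \<psi> a * cv \<psi> \<psi> b + 2 * (?S a b - \<psi> a * \<psi> b)"
        using ne p0 by (simp add: cv_def sum_product algebra_simps)
      finally have "2 * (?S a b - \<psi> a * \<psi> b) = 0" by (simp add: cvq)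
      then show ?thesis using two by simp
    qed
  qed
  show ?thesis using gp main sq by (auto simp: char_iff)
qed

lemma cancel_right:
  assumes "grp z" "X \<in> LF" "Y \<in> LF" "conv X z = conv Y z"
  shows "X = Y"
proof -
  have "X = conv (conv X z) (cinv z)" using assms by (subst conv_assoc) (auto simp: grp_LF)
  also have "\<dots> = conv (conv Y z) (cinv z)" using assms by simp
  also have "\<dots> = Y" using assms by (subst conv_assoc) (auto simp: grp_LF)
  finally show ?thesis .
qed

lemma decomp_sq:
  assumes "grp p" "grp m" "cbar p = p" "cbar m = cinv m"
  shows "conv (cinv (cbar (conv p m))) (conv p m) = conv m m"
proof -
  have "cinv (cbar (conv p m)) = conv m (cinv p)"
    using assms by (simp add: cbar_conv cinv_conv)
  then show ?thesis using assms
    by (simp add: conv_assoc grp_LF flip: conv_assoc[of "cinv p" p m])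
qed

definition thQ :: "nat list \<Rightarrow> 'k::field" where
  "thQ = conv (cinv (cbar zetaQ)) zetaQ"

lemma theta_char_eq: "theta_char = thQ" by (simp add: theta_char_def thQ_def)

lemma thQ_char: "is_character thQ"
  unfolding thQ_def by (intro char_conv char_cinv char_cbar zetaQ_char)

lemma thQ_grp[simp]: "grp thQ" using thQ_char char_grp by blast

lemma thQ_odd: "cbar thQ = cinv thQ"
  using zetaQ_grp by (simp add: thQ_def cbar_conv cinv_conv cbar_cinv)

definition zm :: "nat list \<Rightarrow> 'k::field" where "zm = RR (sq thQ)"
definition zp :: "nat list \<Rightarrow> 'k::field" where "zp = conv zetaQ (cinv zm)"

context
  assumes two: "(2::'k::field) \<noteq> 0"
begin

lemma zm_char: "is_character (zm :: nat list \<Rightarrow> 'k)" and zm_sq: "conv zm zm = (thQ :: nat list \<Rightarrow> 'k)"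
  using sqrt_char[OF two thQ_char] by (auto simp: zm_def)

lemma zm_grp[simp]: "grp (zm :: nat list \<Rightarrow> 'k)" using zm_char char_grp by blast

lemma zm_odd: "cbar zm = cinv (zm :: nat list \<Rightarrow> 'k)"
proof -
  have g: "grp (zm :: nat list \<Rightarrow> 'k)" by (rule zm_grp)
  have "conv (cinv (cbar zm)) (cinv (cbar zm)) = cinv (cbar (conv zm zm :: nat list \<Rightarrow> 'k))"
    using g by (simp add: cinv_conv cbar_conv)
  also have "\<dots> = conv zm zm" using thQ_grp by (simp add: zm_sq thQ_odd)
  finally have eq: "conv (cinv (cbar zm)) (cinv (cbar zm)) = conv zm (zm :: nat list \<Rightarrow> 'k)" .
  have "cinv (cbar zm) = (zm :: nat list \<Rightarrow> 'k)"
    using root_unique[OF two _ _ eq] g by simp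
  then show ?thesis using g by (metis cinv_cinv grp_cbar)
qed

lemma zp_char: "is_character (zp :: nat list \<Rightarrow> 'k)"
  unfolding zp_def by (intro char_conv char_cinv zm_char zetaQ_char)

lemma zp_even: "cbar zp = (zp :: nat list \<Rightarrow> 'k)"
proof -
  have g: "grp (zm :: nat list \<Rightarrow> 'k)" by (rule zm_grp)
  have "cbar zp = conv (cbar zetaQ) (zm :: nat list \<Rightarrow> 'k)"
    using g by (simp add: zp_def cbar_conv cbar_cinv zm_odd)
  also have "\<dots> = zp"
  proof (rule cancel_right[OF g])
    have "conv (conv (cbar zetaQ) zm) zm = conv (cbar zetaQ) (thQ :: nat list \<Rightarrow> 'k)"
      using g zetaQ_grp by (simp add: conv_assoc grp_LF zm_sq)
    also have "\<dots> = zetaQ" using zetaQ_grp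
      by (simp add: thQ_def grp_LF flip: conv_assoc)
    also have "\<dots> = conv zp zm" using g zetaQ_grp by (simp add: zp_def conv_assoc grp_LF)
    finally show "conv (conv (cbar zetaQ) zm) zm = conv zp (zm :: nat list \<Rightarrow> 'k)" .
  qed (use g zetaQ_grp in \<open>auto simp: zp_def grp_LF\<close>)
  finally show ?thesis .
qed

lemma zeta_decomp: "zetaQ = conv zp (zm :: nat list \<Rightarrow> 'k)"
  using zm_grp zetaQ_grp by (simp add: zp_def conv_assoc grp_LF)

lemma zeta_minus_eq: "zeta_minus = (zm :: nat list \<Rightarrow> 'k)"
  unfolding zeta_minus_def
proof (rule the_equality)
  show "\<exists>\<phi>::nat list \<Rightarrow> 'k. is_character \<phi> \<and> is_character (zm :: nat list \<Rightarrow> 'k) \<and> is_even \<phi> \<and> is_odd (zm :: nat list \<Rightarrow> 'k) \<and> zetaQ = conv \<phi> (zm :: nat list \<Rightarrow> 'k)"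
    using zp_char zm_char zp_even zm_odd zeta_decomp by (intro exI[of _ "zp :: nat list \<Rightarrow> 'k"]) (auto simp: is_even_def is_odd_def)
next
  fix \<psi> :: "nat list \<Rightarrow> 'k"
  assume "\<exists>\<phi>. is_character \<phi> \<and> is_character \<psi> \<and> is_even \<phi> \<and> is_odd \<psi> \<and> zetaQ = conv \<phi> \<psi>"
  then obtain \<phi> where h: "is_character \<phi>" "is_character \<psi>" "cbar \<phi> = \<phi>" "cbar \<psi> = cinv \<psi>" "zetaQ = conv \<phi> \<psi>"
    by (auto simp: is_even_def is_odd_def)
  have "conv \<psi> \<psi> = conv (cinv (cbar zetaQ)) zetaQ"
    using decomp_sq[of \<phi> \<psi>] h char_grp by metis
  also have "\<dots> = conv zm zm" by (simp add: zm_sq thQ_def)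
  finally have eq: "conv \<psi> \<psi> = conv zm zm" .
  show "\<psi> = zm" using root_unique[OF two char_grp[OF h(2)] _ eq] by simp
qed

end


fun cf :: "(nat list \<Rightarrow> 'k::field) \<Rightarrow> nat list \<Rightarrow> nat list \<Rightarrow> 'k" where
  "cf \<phi> a [] = (if a = [] then 1 else 0)"
| "cf \<phi> a (n # \<beta>) = (\<Sum>i\<in>{1..length a}. if sum_list (take i a) = n then \<phi> (take i a) * cf \<phi> (drop i a) \<beta> else 0)"

lemma comp_sum_pos: "is_comp t \<Longrightarrow> t \<noteq> [] \<Longrightarrow> 0 < sum_list t"
  by (cases t) auto

lemma cf_supp: "cf \<phi> a \<beta> \<noteq> 0 \<Longrightarrow> is_comp a \<Longrightarrow> is_comp \<beta> \<and> sum_list \<beta> = sum_list a \<and> length \<beta> \<le> length a"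
proof (induction \<beta> arbitrary: a)
  case Nil then show ?case by (auto split: if_splits)
next
  case (Cons n \<beta>)
  from Cons.prems(1) obtain i where i: "i \<in> {1..length a}" and
    nz: "(if sum_list (take i a) = n then \<phi> (take i a) * cf \<phi> (drop i a) \<beta> else 0) \<noteq> 0"
    by (auto elim: sum.not_neutral_contains_not_neutral)
  have s: "sum_list (take i a) = n" and c: "cf \<phi> (drop i a) \<beta> \<noteq> 0" using nz by (auto split: if_splits)
  have IH: "is_comp \<beta> \<and> sum_list \<beta> = sum_list (drop i a) \<and> length \<beta> \<le> length (drop i a)"
    using Cons.IH[OF c] Cons.prems(2) is_comp_drop by blast
  have "take i a \<noteq> []" using i by auto
  then have "0 < n" using s comp_sum_pos is_comp_take Cons.prems(2) by blast
  moreover have "n + sum_list \<beta> = sum_list a" using IH s sum_list_take_drop by metis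
  moreover have "Suc (length \<beta>) \<le> length a" using IH i by auto
  ultimately show ?case using IH by simp
qed

lemma cf_finite: "is_comp a \<Longrightarrow> finite {\<beta>. cf \<phi> a \<beta> \<noteq> 0}"
proof -
  assume a: "is_comp a"
  have "{\<beta>. cf \<phi> a \<beta> \<noteq> 0} \<subseteq> {xs. set xs \<subseteq> {..sum_list a} \<and> length xs \<le> length a}"
    using cf_supp[OF _ a] member_le_sum_list by fastforce
  then show ?thesis by (rule finite_subset) (simp add: finite_lists_length_le)
qed

definition Fm :: "(nat list \<Rightarrow> 'k::field) \<Rightarrow> nat list \<Rightarrow> 'k qsym" where
  "Fm \<phi> a = (if is_comp a then Abs_poly_mapping (cf \<phi> a) else 0)"

lemma lookup_Fm: "Poly_Mapping.lookup (Fm \<phi> a) \<beta> = (if is_comp a then cf \<phi> a \<beta> else 0)"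
  by (simp add: Fm_def cf_finite)

lemma keys_Fm: "\<beta> \<in> Poly_Mapping.keys (Fm \<phi> a) \<longleftrightarrow> is_comp a \<and> cf \<phi> a \<beta> \<noteq> 0"
  by (simp add: in_keys_iff lookup_Fm)

lemma cf_Nil_left: "cf \<phi> [] \<beta> = (if \<beta> = [] then 1 else 0)"
  by (cases \<beta>) auto

lemma Fm_Nil: "Fm \<phi> [] = Mb []"
  by (rule poly_mapping_eqI) (simp add: lookup_Fm lookup_Mb cf_Nil_left)

definition gcm :: "(nat list \<Rightarrow> 'k::field qsym) \<Rightarrow> bool" where
  "gcm F \<longleftrightarrow>
     (\<forall>a. \<not> is_comp a \<longrightarrow> F a = 0) \<and>
     (\<forall>a. is_comp a \<longrightarrow> F a \<in> QSym \<and> (\<forall>b\<in>Poly_Mapping.keys (F a). sum_list b = sum_list a)) \<and>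
     F [] = Mb [] \<and>
     (\<forall>a. is_comp a \<longrightarrow> coprod (F a) = tensor_map F (coprod (Mb a))) \<and>
     (\<forall>a. is_comp a \<longrightarrow> counit (F a) = counit (Mb a))"

lemma hopf_iff: "is_graded_hopf_morphism F \<longleftrightarrow> gcm F \<and>
   (\<forall>a b. is_comp a \<longrightarrow> is_comp b \<longrightarrow> lin F (qmult (Mb a) (Mb b)) = qmult (F a) (F b))"
  by (auto simp: is_graded_hopf_morphism_def gcm_def)

lemma EV_Mb: "EV h (Mb a) = h a" by (simp add: Mb_def)

lemma coalg_iff: "coprod (F a) = tensor_map F (coprod (Mb a)) \<longleftrightarrow>
   (\<forall>u v. Poly_Mapping.lookup (F a) (u @ v) =
       (\<Sum>i\<le>length a. Poly_Mapping.lookup (F (take i a)) u * Poly_Mapping.lookup (F (drop i a)) v))"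
proof -
  have r: "Poly_Mapping.lookup (tensor_map F (coprod (Mb a))) (u, v) =
       (\<Sum>i\<le>length a. Poly_Mapping.lookup (F (take i a)) u * Poly_Mapping.lookup (F (drop i a)) v)" for u v
    by (simp add: lookup_tensor_map EV_coprod EV_Mb)
  show ?thesis
  proof
    assume h: "coprod (F a) = tensor_map F (coprod (Mb a))"
    show "\<forall>u v. Poly_Mapping.lookup (F a) (u @ v) =
       (\<Sum>i\<le>length a. Poly_Mapping.lookup (F (take i a)) u * Poly_Mapping.lookup (F (drop i a)) v)"
      using h r by (metis lookup_coprod)
  next
    assume h: "\<forall>u v. Poly_Mapping.lookup (F a) (u @ v) =
       (\<Sum>i\<le>length a. Poly_Mapping.lookup (F (take i a)) u * Poly_Mapping.lookup (F (drop i a)) v)"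
    show "coprod (F a) = tensor_map F (coprod (Mb a))"
    proof (rule poly_mapping_eqI)
      fix k :: "nat list \<times> nat list"
      obtain u v where k: "k = (u, v)" by force
      show "Poly_Mapping.lookup (coprod (F a)) k = Poly_Mapping.lookup (tensor_map F (coprod (Mb a))) k"
        unfolding k lookup_coprod r using h by simp
    qed
  qed
qed

lemma take_take_le: "k \<le> i \<Longrightarrow> take k (take i a) = take k a" by (simp add: min_def)

lemma cf_append: "cf \<phi> a (u @ v) = (\<Sum>i\<le>length a. cf \<phi> (take i a) u * cf \<phi> (drop i a) v)"
proof (induction u arbitrary: a)
  case Nil
  show ?case
  proof (cases "a = []")
    case True then show ?thesis by simp
  next
    case False
    have "(\<Sum>i\<le>length a. cf \<phi> (take i a) [] * cf \<phi> (drop i a) v) = cf \<phi> a v"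
      by (subst sum_atMost_split0) (use False in \<open>auto intro!: sum.neutral\<close>)
    then show ?thesis by simp
  qed
next
  case (Cons n u)
  let ?n = "length a"
  let ?H = "\<lambda>k i. (if sum_list (take k a) = n then \<phi> (take k a) * cf \<phi> (take (i - k) (drop k a)) u else 0) * cf \<phi> (drop (i - k) (drop k a)) v"
  let ?f = "\<lambda>k i. if k = 0 then 0 else ?H k i"
  have "cf \<phi> a ((n # u) @ v) = (\<Sum>k\<in>{1..?n}. if sum_list (take k a) = n then \<phi> (take k a) *
           (\<Sum>j\<le>?n - k. cf \<phi> (take j (drop k a)) u * cf \<phi> (drop j (drop k a)) v) else 0)"
    by (simp only: append_Cons cf.simps Cons.IH length_drop)
  also have "\<dots> = (\<Sum>k\<le>?n. \<Sum>j\<le>?n - k. ?f k (k + j))"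
    by (subst sum_atMost_split0) (auto intro!: sum.cong simp: sum_distrib_left ac_simps)
  also have "\<dots> = (\<Sum>i\<le>?n. \<Sum>k\<le>i. ?f k i)"
    by (rule sum_triangle[symmetric])
  also have "\<dots> = (\<Sum>i\<le>?n. cf \<phi> (take i a) (n # u) * cf \<phi> (drop i a) v)"
  proof (rule sum.cong[OF refl])
    fix i assume i: "i \<in> {..?n}"
    have "(\<Sum>k\<le>i. ?f k i) = (\<Sum>k\<in>{1..i}. ?H k i)"
      by (subst sum_atMost_split0) simp
    also have "\<dots> = cf \<phi> (take i a) (n # u) * cf \<phi> (drop i a) v"
    proof -
      have li: "length (take i a) = i" using i by simp
      have "cf \<phi> (take i a) (n # u) * cf \<phi> (drop i a) v = (\<Sum>k\<in>{1..i}. (if sum_list (take k (take i a)) = n then \<phi> (take k (take i a)) * cf \<phi> (drop k (take i a)) u else 0) * cf \<phi> (drop i a) v)"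
        by (simp only: cf.simps li sum_distrib_right)
      also have "\<dots> = (\<Sum>k\<in>{1..i}. ?H k i)"
      proof (rule sum.cong[OF refl])
        fix k assume k: "k \<in> {1..i}"
        then have "take k (take i a) = take k a" "drop k (take i a) = take (i - k) (drop k a)"
          "drop i a = drop (i - k) (drop k a)" by (auto simp: min_def drop_take)
        then show "(if sum_list (take k (take i a)) = n then \<phi> (take k (take i a)) * cf \<phi> (drop k (take i a)) u else 0) * cf \<phi> (drop i a) v = ?H k i"
          by simp
      qed
      finally show ?thesis by simp
    qed
    finally show "(\<Sum>k\<le>i. ?f k i) = cf \<phi> (take i a) (n # u) * cf \<phi> (drop i a) v" .
  qed
  finally show ?case .
qed


lemma Fm_zero: "\<not> is_comp a \<Longrightarrow> Fm \<phi> a = 0" by (simp add: Fm_def)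

lemma gcm_Fm: "gcm (Fm \<phi>)"
proof -
  have q: "Fm \<phi> a \<in> QSym \<and> (\<forall>b\<in>Poly_Mapping.keys (Fm \<phi> a). sum_list b = sum_list a)" if "is_comp a" for a
  proof -
    have "\<forall>b. cf \<phi> a b \<noteq> 0 \<longrightarrow> is_comp b \<and> sum_list b = sum_list a" using cf_supp that by blast
    then show ?thesis by (auto simp: QSym_def keys_Fm)
  qed
  have c: "coprod (Fm \<phi> a) = tensor_map (Fm \<phi>) (coprod (Mb a))" if a: "is_comp a" for a
    unfolding coalg_iff using a by (simp add: lookup_Fm cf_append is_comp_take is_comp_drop)
  have u: "counit (Fm \<phi> a) = counit (Mb a)" if "is_comp a" for a
    using that by (simp add: counit_def lookup_Fm lookup_Mb)
  show ?thesis unfolding gcm_def using q c u Fm_zero Fm_Nil by blast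
qed

lemma deg1:
  assumes "f \<in> QSym" "\<forall>\<beta>\<in>Poly_Mapping.keys f. sum_list \<beta> = m" "0 < m"
  shows "ev zetaQ f = Poly_Mapping.lookup f [m]"
proof -
  have "ev zetaQ f = EV (\<lambda>\<beta>. if \<beta> = [m] then 1 else 0) f"
    unfolding ev_EV
  proof (rule EV_mono_eq)
    fix \<beta> assume b: "\<beta> \<in> Poly_Mapping.keys f"
    then have c: "is_comp \<beta>" and s: "sum_list \<beta> = m" using assms by (auto simp: QSym_def)
    show "zetaQ \<beta> = (if \<beta> = [m] then 1 else 0)"
    proof (cases \<beta>)
      case Nil then show ?thesis using s assms by auto
    next
      case (Cons x r)
      then show ?thesis using c s by (cases r) (auto simp: zetaQ_def)
    qed
  qed
  then show ?thesis by (simp add: EV_lookup)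
qed

lemma ev_zeta_Fm:
  assumes "grp \<phi>" "is_comp a"
  shows "ev zetaQ (Fm \<phi> a) = \<phi> a"
proof (cases "a = []")
  case True then show ?thesis using assms by (simp add: Fm_Nil ev_EV EV_Mb zetaQ_def grp_def)
next
  case False
  have g: "gcm (Fm \<phi>)" by (rule gcm_Fm)
  have "ev zetaQ (Fm \<phi> a) = Poly_Mapping.lookup (Fm \<phi> a) [sum_list a]"
    by (rule deg1) (use g assms False comp_sum_pos in \<open>auto simp: gcm_def\<close>)
  also have "\<dots> = (\<Sum>i\<in>{1..length a}. if i = length a then \<phi> a else 0)"
  proof -
    have e: "Poly_Mapping.lookup (Fm \<phi> a) [sum_list a] = (\<Sum>i\<in>{1..length a}. if sum_list (take i a) = sum_list a then \<phi> (take i a) * cf \<phi> (drop i a) [] else 0)"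
      by (simp only: lookup_Fm assms(2) if_True cf.simps(2))
    show ?thesis unfolding e
    proof (rule sum.cong[OF refl])
    fix i assume "i \<in> {1..length a}"
    then show "(if sum_list (take i a) = sum_list a then \<phi> (take i a) * cf \<phi> (drop i a) [] else 0) =
      (if i = length a then \<phi> a else 0)" by auto
    qed
  qed
  also have "\<dots> = \<phi> a" using False by (simp add: Suc_le_eq)
  finally show ?thesis .
qed

lemma gcm_zero: "gcm F \<Longrightarrow> \<not> is_comp a \<Longrightarrow> F a = 0" by (simp add: gcm_def)
lemma gcm_QSym: "gcm F \<Longrightarrow> is_comp a \<Longrightarrow> F a \<in> QSym" by (simp add: gcm_def)
lemma gcm_graded: "gcm F \<Longrightarrow> is_comp a \<Longrightarrow> b \<in> Poly_Mapping.keys (F a) \<Longrightarrow> sum_list b = sum_list a"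
  by (simp add: gcm_def)
lemma gcm_Nil: "gcm F \<Longrightarrow> F [] = Mb []" by (simp add: gcm_def)
lemma gcm_coalg: "gcm F \<Longrightarrow> is_comp a \<Longrightarrow> Poly_Mapping.lookup (F a) (u @ v) =
   (\<Sum>i\<le>length a. Poly_Mapping.lookup (F (take i a)) u * Poly_Mapping.lookup (F (drop i a)) v)"
  by (simp add: gcm_def coalg_iff)
lemma gcm_counit: "gcm F \<Longrightarrow> Poly_Mapping.lookup (F a) [] = (if a = [] then 1 else 0)"
  by (cases "is_comp a") (auto simp: gcm_def counit_def lookup_Mb)

lemma QSym_keys: "f \<in> QSym \<Longrightarrow> b \<in> Poly_Mapping.keys f \<Longrightarrow> is_comp b" by (simp add: QSym_def)

lemma gcm_single:
  assumes "gcm F" "is_comp t"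
  shows "Poly_Mapping.lookup (F t) [n] = (if t \<noteq> [] \<and> n = sum_list t then ev zetaQ (F t) else 0)"
proof (cases "t = []")
  case True then show ?thesis using assms by (simp add: gcm_Nil lookup_Mb)
next
  case False
  have pos: "0 < sum_list t" using False assms comp_sum_pos by blast
  have e: "ev zetaQ (F t) = Poly_Mapping.lookup (F t) [sum_list t]"
    by (rule deg1) (use assms pos gcm_QSym gcm_graded in auto)
  show ?thesis
  proof (cases "n = sum_list t")
    case True then show ?thesis using e False by simp
  next
    case False
    have "[n] \<notin> Poly_Mapping.keys (F t)" using gcm_graded[OF assms] False by force
    then show ?thesis using False by (simp add: in_keys_iff)
  qed
qed

lemma gcm_unique:
  assumes F: "gcm F" and G: "gcm G" and z: "\<And>a. is_comp a \<Longrightarrow> ev zetaQ (F a) = ev zetaQ (G a)"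
  shows "F = G"
proof
  fix a
  show "F a = G a"
  proof (cases "is_comp a")
    case False then show ?thesis using F G by (simp add: gcm_zero)
  next
    case True
    have "\<forall>a. is_comp a \<longrightarrow> Poly_Mapping.lookup (F a) \<beta> = Poly_Mapping.lookup (G a) \<beta>" for \<beta>
    proof (induction \<beta>)
      case Nil then show ?case using F G by (simp add: gcm_counit)
    next
      case (Cons n \<beta>)
      show ?case
      proof (intro allI impI)
        fix a assume a: "is_comp a"
        have s: "Poly_Mapping.lookup (F (take i a)) [n] = Poly_Mapping.lookup (G (take i a)) [n]" for i
          using gcm_single[OF F] gcm_single[OF G] a is_comp_take z by metis
        show "Poly_Mapping.lookup (F a) (n # \<beta>) = Poly_Mapping.lookup (G a) (n # \<beta>)"
          using gcm_coalg[OF F a, of "[n]" \<beta>] gcm_coalg[OF G a, of "[n]" \<beta>] s Cons a is_comp_drop by simp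
      qed
    qed
    then show ?thesis using True by (auto intro: poly_mapping_eqI)
  qed
qed

lemma EV_lin: "EV h (lin G f) = EV (\<lambda>b. EV h (G b)) f"
  unfolding lin_def EV_sum EV_qsmult by (simp add: EV_def)

lemma lin_Mb[simp]: "lin G (Mb a) = G a"
  by (simp add: lin_def Mb_def qsmult_def poly_mapping_eqI lookup_sum lookup_single when_def in_keys_iff)

lemma lin_zero[simp]: "lin G 0 = 0" by (simp add: lin_def)

lemma keys_lin: "\<beta> \<in> Poly_Mapping.keys (lin G f) \<Longrightarrow> \<exists>b\<in>Poly_Mapping.keys f. \<beta> \<in> Poly_Mapping.keys (G b)"
proof -
  assume "\<beta> \<in> Poly_Mapping.keys (lin G f)"
  then have "EV (\<lambda>a. Poly_Mapping.lookup (G a) \<beta>) f \<noteq> 0" by (simp add: in_keys_iff lookup_lin)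
  then obtain b where "b \<in> Poly_Mapping.keys f" "Poly_Mapping.lookup f b * Poly_Mapping.lookup (G b) \<beta> \<noteq> 0"
    unfolding EV_def by (auto elim: sum.not_neutral_contains_not_neutral)
  then show ?thesis by (auto simp: in_keys_iff)
qed

lemma EV_tensor_map: "EV h (tensor_map F t) = EV (\<lambda>p. EV h (tensor (F (fst p)) (F (snd p)))) t"
  unfolding tensor_map_def EV_sum EV_map_mult by (simp add: EV_def)

lemma transfer_cv:
  assumes "gcm F" "is_comp a"
  shows "EV (cv g1 g2) (F a) = (\<Sum>i\<le>length a. EV g1 (F (take i a)) * EV g2 (F (drop i a)))"
proof -
  have "EV (cv g1 g2) (F a) = EV (\<lambda>p. g1 (fst p) * g2 (snd p)) (coprod (F a))"
    by (simp add: EV_coprod cv_def[abs_def])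
  also have "\<dots> = EV (\<lambda>p. g1 (fst p) * g2 (snd p)) (tensor_map F (coprod (Mb a)))"
    using assms by (simp add: gcm_def)
  also have "\<dots> = (\<Sum>i\<le>length a. EV g1 (F (take i a)) * EV g2 (F (drop i a)))"
    by (simp add: EV_tensor_map EV_tensor EV_coprod EV_Mb)
  finally show ?thesis .
qed

definition pull :: "(nat list \<Rightarrow> 'k::field qsym) \<Rightarrow> (nat list \<Rightarrow> 'k) \<Rightarrow> nat list \<Rightarrow> 'k" where
  "pull F \<alpha> = (\<lambda>a. ev \<alpha> (F a))"

lemma pull_LF[simp]: "gcm F \<Longrightarrow> pull F \<alpha> \<in> LF"
  by (simp add: LF_def pull_def gcm_zero ev_EV)

lemma pull_Nil[simp]: "gcm F \<Longrightarrow> pull F \<alpha> [] = \<alpha> []"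
  by (simp add: pull_def gcm_Nil ev_EV EV_Mb)

lemma pull_grp[simp]: "gcm F \<Longrightarrow> grp \<alpha> \<Longrightarrow> grp (pull F \<alpha>)"
  by (simp add: grp_def)

lemma pull_conv:
  assumes F: "gcm F" and "\<alpha> \<in> LF" "\<beta> \<in> LF"
  shows "pull F (conv \<alpha> \<beta>) = conv (pull F \<alpha>) (pull F \<beta>)"
proof
  fix a
  show "pull F (conv \<alpha> \<beta>) a = conv (pull F \<alpha>) (pull F \<beta>) a"
  proof (cases "is_comp a")
    case True
    then show ?thesis using assms
      by (simp add: pull_def conv_cv ev_EV transfer_cv cv_def flip: conv_cv[OF pull_LF[OF F] pull_LF[OF F]])
         (simp add: conv_def cv_def True pull_def ev_EV)
  next
    case False
    then show ?thesis using F by (simp add: pull_def gcm_zero conv_def ev_EV)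
  qed
qed

lemma pull_cbar:
  assumes F: "gcm F"
  shows "pull F (cbar \<alpha>) = cbar (pull F \<alpha>)"
proof
  fix a
  show "pull F (cbar \<alpha>) a = cbar (pull F \<alpha>) a"
  proof (cases "is_comp a")
    case True
    have "EV (cbar \<alpha>) (F a) = EV (\<lambda>b. (-1) ^ sum_list a * \<alpha> b) (F a)"
      by (rule EV_mono_eq) (use gcm_graded[OF F True] in \<open>simp add: cbar_def\<close>)
    then show ?thesis by (simp add: pull_def ev_EV cbar_def EV_scal_fun)
  next
    case False
    then show ?thesis using F by (simp add: pull_def gcm_zero cbar_def ev_EV)
  qed
qed

lemma pull_eps:
  assumes F: "gcm F"
  shows "pull F eps = eps"
proof
  fix a
  have "EV eps (F a) = Poly_Mapping.lookup (F a) []"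
    unfolding eps_def EV_lookup ..
  then show "pull F eps a = eps a" using gcm_counit[OF F] by (simp add: pull_def ev_EV eps_def)
qed

lemma pull_cinv:
  assumes F: "gcm F" and g: "grp \<alpha>"
  shows "pull F (cinv \<alpha>) = cinv (pull F \<alpha>)"
proof (rule cinv_eqI[symmetric])
  show "grp (pull F \<alpha>)" using F g by simp
  show "pull F (cinv \<alpha>) \<in> LF" using F by simp
  show "conv (pull F \<alpha>) (pull F (cinv \<alpha>)) = eps"
    using F g by (simp add: grp_LF flip: pull_conv) (simp add: pull_eps)
qed

lemma pull_comp: "pull (\<lambda>a. lin G (F a)) \<alpha> = pull F (pull G \<alpha>)"
  by (simp add: pull_def ev_EV EV_lin fun_eq_iff)

lemma gcm_comp:
  assumes F: "gcm F" and G: "gcm G"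
  shows "gcm (\<lambda>a. lin G (F a))"
proof -
  have z: "lin G (F a) = 0" if "\<not> is_comp a" for a using F that by (simp add: gcm_zero)
  have q: "lin G (F a) \<in> QSym \<and> (\<forall>b\<in>Poly_Mapping.keys (lin G (F a)). sum_list b = sum_list a)" if a: "is_comp a" for a
  proof -
    have "is_comp \<beta> \<and> sum_list \<beta> = sum_list a" if bk: "\<beta> \<in> Poly_Mapping.keys (lin G (F a))" for \<beta>
    proof -
      obtain b where b: "b \<in> Poly_Mapping.keys (F a)" "\<beta> \<in> Poly_Mapping.keys (G b)" using keys_lin[OF bk] by blast
      have cb: "is_comp b" using b gcm_QSym[OF F a] QSym_keys by blast
      show ?thesis using b cb gcm_QSym[OF G cb] QSym_keys gcm_graded[OF G cb] gcm_graded[OF F a] by metis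
    qed
    then show ?thesis by (auto simp: QSym_def)
  qed
  have n: "lin G (F []) = Mb []" using F G by (simp add: gcm_Nil)
  have c: "coprod (lin G (F a)) = tensor_map (\<lambda>a. lin G (F a)) (coprod (Mb a))" if a: "is_comp a" for a
  proof (subst coalg_iff[where F="\<lambda>a. lin G (F a)"], intro allI)
    fix u v
    have "Poly_Mapping.lookup (lin G (F a)) (u @ v) = EV (\<lambda>b. Poly_Mapping.lookup (G b) (u @ v)) (F a)"
      by (simp add: lookup_lin)
    also have "\<dots> = EV (cv (\<lambda>b. Poly_Mapping.lookup (G b) u) (\<lambda>b. Poly_Mapping.lookup (G b) v)) (F a)"
    proof (rule EV_mono_eq)
      fix b assume "b \<in> Poly_Mapping.keys (F a)"
      then have "is_comp b" using gcm_QSym[OF F a] QSym_keys by blast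
      then show "Poly_Mapping.lookup (G b) (u @ v) = cv (\<lambda>b. Poly_Mapping.lookup (G b) u) (\<lambda>b. Poly_Mapping.lookup (G b) v) b"
        by (simp add: gcm_coalg[OF G] cv_def)
    qed
    also have "\<dots> = (\<Sum>i\<le>length a. Poly_Mapping.lookup (lin G (F (take i a))) u * Poly_Mapping.lookup (lin G (F (drop i a))) v)"
      by (simp add: transfer_cv[OF F a] lookup_lin)
    finally show "Poly_Mapping.lookup (lin G (F a)) (u @ v) = (\<Sum>i\<le>length a. Poly_Mapping.lookup (lin G (F (take i a))) u * Poly_Mapping.lookup (lin G (F (drop i a))) v)" .
  qed
  have u: "counit (lin G (F a)) = counit (Mb a)" if a: "is_comp a" for a
  proof -
    have "Poly_Mapping.lookup (lin G (F a)) [] = EV (\<lambda>b. if b = [] then 1 else 0) (F a)"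
      unfolding lookup_lin by (rule EV_mono_eq) (simp add: gcm_counit[OF G])
    then show ?thesis by (simp add: EV_lookup counit_def gcm_counit[OF F] lookup_Mb)
  qed
  show ?thesis unfolding gcm_def using z q n c u by blast
qed


lemma count_map_cons: "count_list (map ((#) x) l) (n # \<gamma>) = (if x = n then count_list l \<gamma> else 0)"
  by (induction l) auto

lemma count_qsh_Nil: "count_list (qsh b1 b2) [] = (if b1 = [] \<and> b2 = [] then 1 else 0)"
proof (cases "b1 = [] \<and> b2 = []")
  case True then show ?thesis by simp
next
  case False then show ?thesis by (simp add: qsh_Nil_mem)
qed

lemma sum_delta_pair: "(\<Sum>p\<le>n. if x = p \<and> y = n - p then C else 0) = (if x + y = (n::nat) then C else (0::'a::comm_monoid_add))"
proof (cases "x \<le> n")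
  case True
  have "(\<Sum>p\<le>n. if x = p \<and> y = n - p then C else 0) = (\<Sum>p\<le>n. if p = x then (if y = n - x then C else 0) else 0)"
    by (rule sum.cong) auto
  also have "\<dots> = (if y = n - x then C else 0)" using True by (simp add: sum.delta)
  finally show ?thesis using True by auto
next
  case False
  then show ?thesis by (auto intro!: sum.neutral)
qed

lemma count_qsh_Cons:
  "(of_nat (count_list (qsh b1 b2) (n # \<gamma>)) :: 'k::field) =
     (if b1 \<noteq> [] \<and> hd b1 = n then of_nat (count_list (qsh (tl b1) b2) \<gamma>) else 0) +
     (if b2 \<noteq> [] \<and> hd b2 = n then of_nat (count_list (qsh b1 (tl b2)) \<gamma>) else 0) +
     (\<Sum>p\<le>n. if b1 \<noteq> [] \<and> hd b1 = p then (if b2 \<noteq> [] \<and> hd b2 = n - p then of_nat (count_list (qsh (tl b1) (tl b2)) \<gamma>) else 0) else 0)"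
proof (cases b1)
  case Nil
  then show ?thesis by (cases b2) auto
next
  case (Cons x a)
  show ?thesis
  proof (cases b2)
    case Nil
    then show ?thesis using Cons by auto
  next
    case (Cons y b)
    have "(\<Sum>p\<le>n. if b1 \<noteq> [] \<and> hd b1 = p then (if b2 \<noteq> [] \<and> hd b2 = n - p then of_nat (count_list (qsh (tl b1) (tl b2)) \<gamma>) else 0) else 0)
        = (if x + y = n then of_nat (count_list (qsh a b) \<gamma>) else (0::'k))"
    proof -
      have "(\<Sum>p\<le>n. if b1 \<noteq> [] \<and> hd b1 = p then (if b2 \<noteq> [] \<and> hd b2 = n - p then of_nat (count_list (qsh (tl b1) (tl b2)) \<gamma>) else 0) else 0)
        = (\<Sum>p\<le>n. if x = p \<and> y = n - p then of_nat (count_list (qsh a b) \<gamma>) else (0::'k))"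
        using \<open>b1 = x # a\<close> Cons by (intro sum.cong) auto
      then show ?thesis by (simp add: sum_delta_pair)
    qed
    then show ?thesis using \<open>b1 = x # a\<close> Cons by (simp add: count_map_cons)
  qed
qed

definition dl :: "nat \<Rightarrow> 'k::field qsym \<Rightarrow> 'k qsym" where
  "dl n f = (\<Sum>a\<in>Poly_Mapping.keys f. if a \<noteq> [] \<and> hd a = n then Poly_Mapping.single (tl a) (Poly_Mapping.lookup f a) else 0)"

lemma EV_dl: "EV h (dl n f) = EV (\<lambda>a. if a \<noteq> [] \<and> hd a = n then h (tl a) else 0) f"
  unfolding dl_def EV_sum EV_def[of _ f] by (rule sum.cong) auto

lemma EV_if_const: "EV (\<lambda>b. if P then h b else 0) g = (if P then EV h g else 0)"
  by (simp add: EV_def)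

lemma lookup_dl: "Poly_Mapping.lookup (dl n f) \<beta> = Poly_Mapping.lookup f (n # \<beta>)"
proof -
  have "Poly_Mapping.lookup (dl n f) \<beta> = EV (\<lambda>a. if a \<noteq> [] \<and> hd a = n then (if tl a = \<beta> then 1 else 0) else 0) f"
    by (simp add: EV_dl flip: EV_lookup)
  also have "\<dots> = EV (\<lambda>a. if a = n # \<beta> then 1 else 0) f"
    by (rule EV_mono_eq) (auto simp: neq_Nil_conv)
  finally show ?thesis by (simp add: EV_lookup)
qed

lemma qmult_D: "Poly_Mapping.lookup (qmult f g) (n # \<gamma>) =
   Poly_Mapping.lookup (qmult (dl n f) g) \<gamma> + Poly_Mapping.lookup (qmult f (dl n g)) \<gamma> +
   (\<Sum>p\<le>n. Poly_Mapping.lookup (qmult (dl p f) (dl (n - p) g)) \<gamma>)"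
proof -
  let ?C = "\<lambda>a b. (of_nat (count_list (qsh a b) \<gamma>) :: 'a)"
  have "Poly_Mapping.lookup (qmult f g) (n # \<gamma>) =
     EV (\<lambda>a. EV (\<lambda>b. if a \<noteq> [] \<and> hd a = n then ?C (tl a) b else 0) g) f +
     EV (\<lambda>a. EV (\<lambda>b. if b \<noteq> [] \<and> hd b = n then ?C a (tl b) else 0) g) f +
     (\<Sum>p\<le>n. EV (\<lambda>a. EV (\<lambda>b. if a \<noteq> [] \<and> hd a = p then (if b \<noteq> [] \<and> hd b = n - p then ?C (tl a) (tl b) else 0) else 0) g) f)"
    unfolding lookup_qmult count_qsh_Cons EV_lin_fun EV_sum_fun ..
  also have "\<dots> = Poly_Mapping.lookup (qmult (dl n f) g) \<gamma> + Poly_Mapping.lookup (qmult f (dl n g)) \<gamma> +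
   (\<Sum>p\<le>n. Poly_Mapping.lookup (qmult (dl p f) (dl (n - p) g)) \<gamma>)"
    unfolding lookup_qmult EV_dl EV_if_const ..
  finally show ?thesis .
qed


lemma EV_qmult_Mb: "EV h (qmult (Mb a) (Mb b) :: 'k::field qsym) = (\<Sum>c\<leftarrow>qsh a b. h c)"
  using ev_qmult_Mb[of h a b] by (simp add: ev_EV)

lemma lookup_lin_qmult: "Poly_Mapping.lookup (lin F (qmult (Mb a) (Mb b))) \<gamma> = (\<Sum>c\<leftarrow>qsh a b. Poly_Mapping.lookup (F c) \<gamma>)"
  by (simp add: lookup_lin EV_qmult_Mb)

lemma B_sum1: "Poly_Mapping.lookup (qmult (\<Sum>i\<in>S. qsmult (c i) (f i)) g) \<gamma> = (\<Sum>i\<in>S. c i * Poly_Mapping.lookup (qmult (f i) g) \<gamma>)"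
  by (simp add: lookup_qmult EV_sum EV_qsmult)

lemma B_sum2: "Poly_Mapping.lookup (qmult f (\<Sum>i\<in>S. qsmult (c i) (g i))) \<gamma> = (\<Sum>i\<in>S. c i * Poly_Mapping.lookup (qmult f (g i)) \<gamma>)"
  by (simp add: lookup_qmult EV_sum EV_qsmult EV_sum_fun EV_scal_fun)

lemma dl_Fm:
  assumes "is_comp a"
  shows "dl n (Fm \<phi> a) = (\<Sum>i\<in>{1..length a}. qsmult (if sum_list (take i a) = n then \<phi> (take i a) else 0) (Fm \<phi> (drop i a)))"
  by (rule poly_mapping_eqI)
     (auto simp: lookup_dl lookup_sum lookup_Fm assms is_comp_drop intro!: sum.cong)

lemma B_Nil: "Poly_Mapping.lookup (qmult f g) [] = Poly_Mapping.lookup f [] * Poly_Mapping.lookup g []"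
proof -
  have e: "EV (\<lambda>b. of_nat (count_list (qsh a b) [])) g = Poly_Mapping.lookup g [] * (if a = [] then 1 else 0)" for a
  proof (cases "a = []")
    case True
    have "EV (\<lambda>b. of_nat (count_list (qsh a b) [])) g = EV (\<lambda>b. if b = [] then 1 else 0) g"
      by (rule EV_mono_eq) (simp add: count_qsh_Nil True)
    then show ?thesis using True by (simp add: EV_lookup)
  next
    case False
    then show ?thesis by (simp add: count_qsh_Nil EV_def)
  qed
  show ?thesis unfolding lookup_qmult e EV_scal_fun EV_lookup by simp
qed

lemma sum_delta_prod: "(\<Sum>p\<le>n. (if s1 = p then x1 else 0) * (if s2 = n - p then x2 else 0)) =
   (if s1 + s2 = (n::nat) then x1 * x2 else (0::'k::field))"
proof -
  have "(\<Sum>p\<le>n. (if s1 = p then x1 else 0) * (if s2 = n - p then x2 else 0)) = (\<Sum>p\<le>n. if s1 = p \<and> s2 = n - p then x1 * x2 else 0)"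
    by (rule sum.cong) auto
  then show ?thesis by (simp add: sum_delta_pair)
qed


lemma sum_list_prod3: "(\<Sum>u\<leftarrow>l1. \<Sum>v\<leftarrow>l2. c * (f u * g v)) = c * ((\<Sum>u\<leftarrow>l1. f u) * (\<Sum>v\<leftarrow>l2. (g v :: 'a::comm_semiring_1)))"
  by (simp add: sum_list_const_mult sum_list_mult_const ac_simps)

lemma take_eq_Nil_le: "i \<le> length a \<Longrightarrow> take i a = [] \<longleftrightarrow> i = 0" by auto

lemma Fm_mult:
  assumes ch: "is_character \<phi>"
  shows "\<forall>a b. is_comp a \<longrightarrow> is_comp b \<longrightarrow>
     Poly_Mapping.lookup (lin (Fm \<phi>) (qmult (Mb a) (Mb b))) \<gamma> = Poly_Mapping.lookup (qmult (Fm \<phi> a) (Fm \<phi> b)) \<gamma>"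
proof (induction \<gamma>)
  case Nil
  show ?case
  proof (intro allI impI)
    fix a b :: "nat list" assume ab: "is_comp a" "is_comp b"
    have "Poly_Mapping.lookup (lin (Fm \<phi>) (qmult (Mb a) (Mb b))) [] = (\<Sum>c\<leftarrow>qsh a b. Poly_Mapping.lookup (Fm \<phi> c) [])"
      by (rule lookup_lin_qmult)
    also have "\<dots> = (\<Sum>c\<leftarrow>qsh a b. eps c)"
      by (rule sum_list_cong_set) (use ab qsh_set_comp in \<open>auto simp: lookup_Fm eps_def\<close>)
    also have "\<dots> = eps a * eps b" by (rule eps_qsh)
    also have "\<dots> = Poly_Mapping.lookup (qmult (Fm \<phi> a) (Fm \<phi> b)) []"
      using ab by (simp add: B_Nil lookup_Fm eps_def)
    finally show "Poly_Mapping.lookup (lin (Fm \<phi>) (qmult (Mb a) (Mb b))) [] = Poly_Mapping.lookup (qmult (Fm \<phi> a) (Fm \<phi> b)) []" .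
  qed
next
  case (Cons n \<gamma>)
  have p1: "\<phi> [] = 1" using ch char_grp grp_def by blast
  show ?case
  proof (intro allI impI)
    fix a b :: "nat list" assume ab: "is_comp a" "is_comp b"
    define L where "L x y = (\<Sum>c\<leftarrow>qsh x y. Poly_Mapping.lookup (Fm \<phi> c) \<gamma>)" for x y
    have IH: "Poly_Mapping.lookup (qmult (Fm \<phi> x) (Fm \<phi> y)) \<gamma> = L x y" if "is_comp x" "is_comp y" for x y
      using Cons that by (simp add: L_def lookup_lin_qmult)
    define cc where "cc p t = (if sum_list t = p then \<phi> t else 0)" for p t
    define T where "T i j = (if (i, j) = (0::nat, 0::nat) then 0 else
        if sum_list (take i a) + sum_list (take j b) = n then \<phi> (take i a) * \<phi> (take j b) * L (drop i a) (drop j b) else 0)" for i j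
    let ?G = "\<lambda>u v. if u = [] then 0 else if sum_list u = n then \<phi> u * Poly_Mapping.lookup (Fm \<phi> v) \<gamma> else 0"
    have lhs: "Poly_Mapping.lookup (lin (Fm \<phi>) (qmult (Mb a) (Mb b))) (n # \<gamma>) = (\<Sum>i\<le>length a. \<Sum>j\<le>length b. T i j)"
    proof -
      have "Poly_Mapping.lookup (lin (Fm \<phi>) (qmult (Mb a) (Mb b))) (n # \<gamma>) =
          (\<Sum>c\<leftarrow>qsh a b. \<Sum>k\<le>length c. ?G (take k c) (drop k c))"
        unfolding lookup_lin_qmult
      proof (rule sum_list_cong_set)
        fix c assume c: "c \<in> set (qsh a b)"
        then have cc': "is_comp c" using ab qsh_set_comp by blast
        show "Poly_Mapping.lookup (Fm \<phi> c) (n # \<gamma>) = (\<Sum>k\<le>length c. ?G (take k c) (drop k c))"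
          using cc' by (subst sum_atMost_split0) (auto simp: lookup_Fm is_comp_drop intro!: sum.cong)
      qed
      also have "\<dots> = (\<Sum>i\<le>length a. \<Sum>j\<le>length b. \<Sum>u\<leftarrow>qsh (take i a) (take j b). \<Sum>v\<leftarrow>qsh (drop i a) (drop j b). ?G u v)"
        by (rule bialg)
      also have "\<dots> = (\<Sum>i\<le>length a. \<Sum>j\<le>length b. T i j)"
      proof (intro sum.cong refl)
        fix i j assume i: "i \<in> {..length a}" and j: "j \<in> {..length b}"
        show "(\<Sum>u\<leftarrow>qsh (take i a) (take j b). \<Sum>v\<leftarrow>qsh (drop i a) (drop j b). ?G u v) = T i j"
        proof (cases "(i, j) = (0, 0)")
          case True then show ?thesis by (simp add: T_def)
        next
          case False
          have "(\<Sum>u\<leftarrow>qsh (take i a) (take j b). \<Sum>v\<leftarrow>qsh (drop i a) (drop j b). ?G u v) =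
             (\<Sum>u\<leftarrow>qsh (take i a) (take j b). \<Sum>v\<leftarrow>qsh (drop i a) (drop j b).
                (if sum_list (take i a) + sum_list (take j b) = n then 1 else 0) * (\<phi> u * Poly_Mapping.lookup (Fm \<phi> v) \<gamma>))"
          proof (rule sum_list_cong_set, rule sum_list_cong_set)
            fix u v assume u: "u \<in> set (qsh (take i a) (take j b))"
            have "u \<noteq> []" using u False i j qsh_Nil_mem by fastforce
            then show "?G u v = (if sum_list (take i a) + sum_list (take j b) = n then 1 else 0) * (\<phi> u * Poly_Mapping.lookup (Fm \<phi> v) \<gamma>)"
              using qsh_set_sum[OF u] by simp
          qed
          also have "\<dots> = T i j"
            unfolding sum_list_prod3 char_mult[OF ch is_comp_take[OF ab(1)] is_comp_take[OF ab(2)]]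
            using False by (auto simp: T_def L_def)
          finally show ?thesis .
        qed
      qed
      finally show ?thesis .
    qed
    have rhs: "Poly_Mapping.lookup (qmult (Fm \<phi> a) (Fm \<phi> b)) (n # \<gamma>) =
       (\<Sum>i\<in>{1..length a}. T i 0) + (\<Sum>j\<in>{1..length b}. T 0 j) + (\<Sum>i\<in>{1..length a}. \<Sum>j\<in>{1..length b}. T i j)"
    proof -
      have "Poly_Mapping.lookup (qmult (Fm \<phi> a) (Fm \<phi> b)) (n # \<gamma>) =
         (\<Sum>i\<in>{1..length a}. cc n (take i a) * L (drop i a) b) +
         (\<Sum>j\<in>{1..length b}. cc n (take j b) * L a (drop j b)) +
         (\<Sum>p\<le>n. \<Sum>j\<in>{1..length b}. cc (n - p) (take j b) * (\<Sum>i\<in>{1..length a}. cc p (take i a) * L (drop i a) (drop j b)))"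
        unfolding qmult_D dl_Fm[OF ab(1)] dl_Fm[OF ab(2)] B_sum1 B_sum2
        using ab by (simp add: cc_def IH is_comp_drop)
      also have "\<dots> = (\<Sum>i\<in>{1..length a}. T i 0) + (\<Sum>j\<in>{1..length b}. T 0 j) + (\<Sum>i\<in>{1..length a}. \<Sum>j\<in>{1..length b}. T i j)"
      proof -
        have t1: "(\<Sum>i\<in>{1..length a}. cc n (take i a) * L (drop i a) b) = (\<Sum>i\<in>{1..length a}. T i 0)"
          by (rule sum.cong) (auto simp: cc_def T_def p1)
        have t2: "(\<Sum>j\<in>{1..length b}. cc n (take j b) * L a (drop j b)) = (\<Sum>j\<in>{1..length b}. T 0 j)"
          by (rule sum.cong) (auto simp: cc_def T_def p1)
        have "(\<Sum>p\<le>n. \<Sum>j\<in>{1..length b}. cc (n - p) (take j b) * (\<Sum>i\<in>{1..length a}. cc p (take i a) * L (drop i a) (drop j b)))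
          = (\<Sum>i\<in>{1..length a}. \<Sum>j\<in>{1..length b}. (\<Sum>p\<le>n. cc p (take i a) * cc (n - p) (take j b)) * L (drop i a) (drop j b))"
          by (simp add: sum_distrib_left sum_distrib_right sum.swap[of _ "{..n}"] ac_simps) (rule sum.cong[OF refl], rule sum.swap)
        also have "\<dots> = (\<Sum>i\<in>{1..length a}. \<Sum>j\<in>{1..length b}. T i j)"
          by (intro sum.cong refl) (auto simp: cc_def T_def sum_delta_prod)
        finally show ?thesis using t1 t2 by simp
      qed
      finally show ?thesis .
    qed
    have "(\<Sum>i\<le>length a. \<Sum>j\<le>length b. T i j) =
       (\<Sum>i\<in>{1..length a}. T i 0) + (\<Sum>j\<in>{1..length b}. T 0 j) + (\<Sum>i\<in>{1..length a}. \<Sum>j\<in>{1..length b}. T i j)"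
      by (simp add: sum_atMost_split0[of _ "length a"] sum_atMost_split0[of _ "length b"] sum.distrib T_def)
    then show "Poly_Mapping.lookup (lin (Fm \<phi>) (qmult (Mb a) (Mb b))) (n # \<gamma>) = Poly_Mapping.lookup (qmult (Fm \<phi> a) (Fm \<phi> b)) (n # \<gamma>)"
      using lhs rhs by simp
  qed
qed

lemma hopf_Fm:
  assumes "is_character \<phi>"
  shows "is_graded_hopf_morphism (Fm \<phi>)"
  unfolding hopf_iff using gcm_Fm Fm_mult[OF assms] by (blast intro: poly_mapping_eqI)


lemma pull_Fm_zeta: "grp \<phi> \<Longrightarrow> pull (Fm \<phi>) zetaQ = \<phi>"
proof
  fix a assume g: "grp \<phi>"
  show "pull (Fm \<phi>) zetaQ a = \<phi> a"
  proof (cases "is_comp a")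
    case True then show ?thesis using g by (simp add: pull_def ev_zeta_Fm)
  next
    case False then show ?thesis using g by (simp add: pull_def Fm_zero ev_EV grp_def LF_D)
  qed
qed

lemma gcm_eqI: "gcm F \<Longrightarrow> gcm G \<Longrightarrow> pull F zetaQ = pull G zetaQ \<Longrightarrow> F = G"
  by (rule gcm_unique) (auto simp: pull_def fun_eq_iff)

lemma induced_eq:
  assumes "is_character \<phi>"
  shows "induced_morphism \<phi> = Fm \<phi>"
  unfolding induced_morphism_def
proof (rule the_equality)
  show "is_graded_hopf_morphism (Fm \<phi>) \<and> (\<forall>a. is_comp a \<longrightarrow> ev zetaQ (Fm \<phi> a) = \<phi> a)"
    using hopf_Fm[OF assms] ev_zeta_Fm char_grp[OF assms] by blast
next
  fix F assume h: "is_graded_hopf_morphism F \<and> (\<forall>a. is_comp a \<longrightarrow> ev zetaQ (F a) = \<phi> a)"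
  have gF: "gcm F" using h hopf_iff by blast
  show "F = Fm \<phi>"
    by (rule gcm_unique[OF gF gcm_Fm]) (use h ev_zeta_Fm[OF char_grp[OF assms]] in simp)
qed

lemma lin_lin: "lin G (lin F f) = lin (\<lambda>a. lin G (F a)) f"
  by (rule poly_mapping_eqI) (simp add: lookup_lin EV_lin)

lemma lin_QSym: "gcm F \<Longrightarrow> lin F f \<in> QSym"
proof -
  assume F: "gcm F"
  have "is_comp \<beta>" if bk: "\<beta> \<in> Poly_Mapping.keys (lin F f)" for \<beta>
  proof -
    obtain b where b: "b \<in> Poly_Mapping.keys f" "\<beta> \<in> Poly_Mapping.keys (F b)" using keys_lin[OF bk] by blast
    then have "is_comp b" using F gcm_zero by fastforce
    then show ?thesis using b gcm_QSym[OF F] QSym_keys by blast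
  qed
  then show ?thesis by (auto simp: QSym_def)
qed

lemma lin_add: "lin F (f + g) = lin F f + lin F g"
  by (rule poly_mapping_eqI) (simp add: lookup_lin lookup_add EV_add)

lemma lin_qsmult: "lin F (qsmult c f) = qsmult c (lin F f)"
  by (rule poly_mapping_eqI) (simp add: lookup_lin EV_qsmult)

lemma QSym_add: "f \<in> QSym \<Longrightarrow> g \<in> QSym \<Longrightarrow> f + g \<in> QSym"
  using keys_add[of f g] by (auto simp: QSym_def)

lemma QSym_qsmult: "f \<in> QSym \<Longrightarrow> qsmult c f \<in> QSym"
  by (auto simp: QSym_def in_keys_iff)

lemma QSym_zero[simp]: "0 \<in> QSym" by (simp add: QSym_def)
lemma QSym_Mb: "is_comp a \<Longrightarrow> Mb a \<in> QSym" by (simp add: QSym_def)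

lemma qsmult_1[simp]: "qsmult 1 f = f" by (rule poly_mapping_eqI) simp
lemma qsmult_qsmult: "qsmult c (qsmult d f) = qsmult (c * d) f" by (rule poly_mapping_eqI) simp

context
  assumes two: "(2::'k::field) \<noteq> 0"
begin

definition Psi :: "nat list \<Rightarrow> 'k qsym" where "Psi = Fm zm"
definition Th :: "nat list \<Rightarrow> 'k qsym" where "Th = Fm thQ"
definition TT :: "nat list \<Rightarrow> 'k qsym" where "TT = Fm (conv zetaQ zetaQ)"

lemma Psi_minus_eq: "Psi_minus = Psi"
  unfolding Psi_minus_def Psi_def zeta_minus_eq[OF two] by (rule induced_eq[OF zm_char[OF two]])

lemma Theta_eq: "Theta = Th"
  unfolding Theta_def Th_def theta_char_eq by (rule induced_eq[OF thQ_char])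

lemma gcm_Psi: "gcm Psi" by (simp add: Psi_def gcm_Fm)
lemma gcm_Th: "gcm Th" by (simp add: Th_def gcm_Fm)
lemma gcm_TT: "gcm TT" by (simp add: TT_def gcm_Fm)

lemma pull_Psi: "pull Psi zetaQ = zm" by (simp add: Psi_def pull_Fm_zeta zm_grp[OF two])
lemma pull_Th: "pull Th zetaQ = thQ" by (simp add: Th_def pull_Fm_zeta)
lemma pull_TT: "pull TT zetaQ = conv zetaQ zetaQ" by (simp add: TT_def pull_Fm_zeta)

lemma Th_Psi: "(\<lambda>a. lin Th (Psi a)) = Th"
proof (rule gcm_eqI[OF gcm_comp[OF gcm_Psi gcm_Th] gcm_Th])
  have g: "grp (zm :: nat list \<Rightarrow> 'k)" by (rule zm_grp[OF two])
  have "pull (\<lambda>a. lin Th (Psi a)) zetaQ = pull Psi thQ" by (simp add: pull_comp pull_Th)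
  also have "\<dots> = conv (cinv (cbar zm)) zm"
    unfolding thQ_def using gcm_Psi
    by (simp add: pull_conv grp_LF pull_cinv pull_cbar pull_Psi)
  also have "\<dots> = thQ" using g by (simp add: zm_odd[OF two] zm_sq[OF two])
  finally show "pull (\<lambda>a. lin Th (Psi a)) zetaQ = pull Th zetaQ" by (simp add: pull_Th)
qed

lemma Psi_Th: "(\<lambda>a. lin Psi (Th a)) = Th"
proof (rule gcm_eqI[OF gcm_comp[OF gcm_Th gcm_Psi] gcm_Th])
  define m' where "m' = pull Th (zm :: nat list \<Rightarrow> 'k)"
  define p' where "p' = pull Th (zp :: nat list \<Rightarrow> 'k)"
  have gm: "grp m'" unfolding m'_def using gcm_Th zm_grp[OF two] by simp
  have gp: "grp p'" unfolding p'_def by (rule pull_grp[OF gcm_Th char_grp[OF zp_char[OF two]]])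
  have "conv p' m' = pull Th (conv zp zm)" unfolding p'_def m'_def
    by (rule pull_conv[symmetric, OF gcm_Th]) (use char_grp[OF zp_char[OF two]] zm_grp[OF two] in \<open>auto simp: grp_LF\<close>)
  then have dec: "thQ = conv p' m'" by (simp add: pull_Th flip: zeta_decomp[OF two])
  have ev: "cbar p' = p'" unfolding p'_def pull_cbar[OF gcm_Th, symmetric] zp_even[OF two] ..
  have od: "cbar m' = cinv m'" unfolding m'_def pull_cbar[OF gcm_Th, symmetric] zm_odd[OF two]
    by (rule pull_cinv[OF gcm_Th zm_grp[OF two]])
  have "conv (cinv (cbar thQ)) thQ = conv m' m'" using decomp_sq[OF gp gm ev od] dec by simp
  then have "conv thQ thQ = conv m' m'" by (simp add: thQ_odd)
  then have "thQ = m'" by (rule root_unique[OF two thQ_grp gm])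
  then show "pull (\<lambda>a. lin Psi (Th a)) zetaQ = pull Th zetaQ"
    by (simp add: pull_comp pull_Psi pull_Th m'_def)
qed

lemma TT_Psi: "(\<lambda>a. lin TT (Psi a)) = Th"
proof (rule gcm_eqI[OF gcm_comp[OF gcm_Psi gcm_TT] gcm_Th])
  show "pull (\<lambda>a. lin TT (Psi a)) zetaQ = pull Th zetaQ"
    using gcm_Psi by (simp add: pull_comp pull_TT pull_conv zetaQ_LF pull_Psi pull_Th zm_sq[OF two])
qed

end


lemma prod_list_const: "prod_list (map (\<lambda>x. c) a) = c ^ length a"
  by (induction a) auto

lemma cf_diag:
  "is_comp a \<Longrightarrow> length a \<le> length \<beta> \<Longrightarrow> cf \<phi> a \<beta> = (if \<beta> = a then prod_list (map (\<lambda>x. \<phi> [x]) a) else 0)"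
proof (induction \<beta> arbitrary: a)
  case Nil then show ?case by simp
next
  case (Cons n \<beta>)
  show ?case
  proof (cases a)
    case Nil then show ?thesis by simp
  next
    case (Cons x a')
    have ca': "is_comp a'" using Cons.prems Cons by simp
    have z: "(if sum_list (take i a) = n then \<phi> (take i a) * cf \<phi> (drop i a) \<beta> else 0) = 0" if i: "i \<in> {2..length a}" for i
    proof -
      have "cf \<phi> (drop i a) \<beta> = 0"
      proof (rule ccontr)
        assume "cf \<phi> (drop i a) \<beta> \<noteq> 0"
        then have "length \<beta> \<le> length (drop i a)" using cf_supp Cons.prems(1) is_comp_drop by blast
        then show False using i Cons.prems(2) Cons by auto
      qed
      then show ?thesis by simp
    qed
    let ?g = "\<lambda>i. if sum_list (take i a) = n then \<phi> (take i a) * cf \<phi> (drop i a) \<beta> else 0"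
    have e: "{1..length a} = insert 1 {2..length a}" using Cons by auto
    have "cf \<phi> a (n # \<beta>) = (\<Sum>i\<in>insert 1 {2..length a}. ?g i)" by (simp only: cf.simps(2) e)
    also have "\<dots> = ?g 1 + (\<Sum>i\<in>{2..length a}. ?g i)" by (rule sum.insert) auto
    also have "(\<Sum>i\<in>{2..length a}. ?g i) = 0" using z by (auto intro: sum.neutral)
    finally have "cf \<phi> a (n # \<beta>) = (if x = n then \<phi> [x] * cf \<phi> a' \<beta> else 0)"
      using Cons by simp
    also have "\<dots> = (if n # \<beta> = a then prod_list (map (\<lambda>x. \<phi> [x]) a) else 0)"
      using Cons.IH[OF ca'] Cons.prems(2) Cons by auto
    finally show ?thesis .
  qed
qed

context
  assumes two: "(2::'k::field) \<noteq> 0"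
begin

lemma TT_diag:
  assumes "is_comp a" "length a \<le> length \<beta>"
  shows "Poly_Mapping.lookup (TT a) \<beta> = (if \<beta> = a then (2::'k) ^ length a else 0)"
proof -
  have "prod_list (map (\<lambda>x. conv zetaQ zetaQ [x]) a) = prod_list (map (\<lambda>x. (2::'k)) a)"
    by (rule arg_cong[where f=prod_list], rule map_cong[OF refl])
       (use assms(1) in \<open>auto simp: is_comp_def conv_def cv_def zetaQ_def\<close>)
  then show ?thesis using assms unfolding TT_def[OF two] by (simp add: lookup_Fm cf_diag prod_list_const)
qed


lemma tri:
  fixes f :: "'k qsym"
  assumes f: "f \<in> QSym" and j: "\<forall>a\<in>Poly_Mapping.keys f. length a \<le> j" and b: "j \<le> length \<beta>"
  shows "Poly_Mapping.lookup (lin TT f) \<beta> = (2::'k) ^ length \<beta> * Poly_Mapping.lookup f \<beta>"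
proof -
  have "Poly_Mapping.lookup (lin TT f) \<beta> = EV (\<lambda>a. (2::'k) ^ length \<beta> * (if a = \<beta> then 1 else 0)) f"
    unfolding lookup_lin
  proof (rule EV_mono_eq)
    fix a assume a: "a \<in> Poly_Mapping.keys f"
    then have "is_comp a" "length a \<le> length \<beta>" using f j b QSym_keys by fastforce+
    then show "Poly_Mapping.lookup (TT a) \<beta> = (2::'k) ^ length \<beta> * (if a = \<beta> then 1 else 0)"
      by (auto simp: TT_diag)
  qed
  then show ?thesis by (simp add: EV_scal_fun EV_lookup)
qed

lemma TT_inj:
  fixes g :: "'k qsym"
  assumes g: "g \<in> QSym" and z: "lin TT g = 0"
  shows "g = 0"
proof (rule ccontr)
  assume "g \<noteq> 0"
  then have ne: "Poly_Mapping.keys g \<noteq> {}" by simp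
  define j where "j = Max (length ` Poly_Mapping.keys g)"
  have "j \<in> length ` Poly_Mapping.keys g" unfolding j_def by (rule Max_in) (use ne in auto)
  then obtain \<beta> where b: "\<beta> \<in> Poly_Mapping.keys g" "length \<beta> = j" by auto
  have jj: "\<forall>a\<in>Poly_Mapping.keys g. length a \<le> j" unfolding j_def by simp
  have "Poly_Mapping.lookup (lin TT g) \<beta> = (2::'k) ^ length \<beta> * Poly_Mapping.lookup g \<beta>"
    by (rule tri[OF g jj]) (simp add: b)
  then have "(2::'k) ^ length \<beta> * Poly_Mapping.lookup g \<beta> = 0" using z by simp
  then show False using two b(1) by (simp add: in_keys_iff)
qed

lemma keys_zero_len: fixes d :: "'k qsym" shows "(\<forall>\<beta>\<in>Poly_Mapping.keys d. length \<beta> \<le> 0) \<Longrightarrow> d = qsmult (Poly_Mapping.lookup d []) (Mb [])"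
  by (rule poly_mapping_eqI) (auto simp: lookup_Mb in_keys_iff)

abbreviation PP :: "'k qsym set" where "PP \<equiv> lin Psi ` QSym"

lemma TT_Psi_lin: "lin TT (lin Psi h) = lin Th h" for h :: "'k qsym"
  by (simp add: lin_lin TT_Psi[OF two])

lemma Psi_Th_lin: "lin Psi (lin Th h) = lin Th h" for h :: "'k qsym"
  by (simp add: lin_lin Psi_Th[OF two])

lemma Th_Psi_lin: "lin Th (lin Psi h) = lin Th h" for h :: "'k qsym"
  by (simp add: lin_lin Th_Psi[OF two])

lemma PP_add: "x \<in> PP \<Longrightarrow> y \<in> PP \<Longrightarrow> x + y \<in> PP"
  by (auto simp flip: lin_add intro: QSym_add)

lemma PP_qsmult: "x \<in> PP \<Longrightarrow> qsmult c x \<in> PP"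
  by (auto simp flip: lin_qsmult intro: QSym_qsmult)

lemma PP_TT: "x \<in> PP \<Longrightarrow> lin TT x \<in> PP"
proof -
  assume "x \<in> PP"
  then obtain h where h: "h \<in> QSym" "x = lin Psi h" by blast
  have "lin TT x = lin Psi (lin Th h)" using h by (simp add: TT_Psi_lin Psi_Th_lin)
  moreover have "lin Th h \<in> QSym" by (rule lin_QSym[OF gcm_Th[OF two]])
  ultimately show ?thesis by blast
qed

lemma PP_Mb: "(Mb [] :: 'k qsym) \<in> PP"
proof -
  have "lin Psi (Mb []) = (Mb [] :: 'k qsym)" using gcm_Psi[OF two] by (simp add: gcm_Nil)
  then show ?thesis using QSym_Mb[of "[]"] by (metis image_eqI is_comp_Nil)
qed

lemma PP_QSym: "x \<in> PP \<Longrightarrow> x \<in> QSym" using lin_QSym[OF gcm_Psi[OF two]] by blast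

lemma surj_step:
  fixes c d g :: "'k qsym" and s :: 'k
  assumes c: "c \<in> PP" and d: "d \<in> QSym" "\<forall>\<beta>\<in>Poly_Mapping.keys d. length \<beta> \<le> Suc j"
    and g: "g \<in> PP" and s: "s \<noteq> 0" and e: "d = lin TT g + qsmult s c"
  shows "\<exists>d g s. d \<in> QSym \<and> (\<forall>\<beta>\<in>Poly_Mapping.keys d. length \<beta> \<le> j) \<and> g \<in> PP \<and> s \<noteq> 0 \<and> d = lin TT g + qsmult s c"
proof -
  define k where "k = (2::'k) ^ Suc j"
  define d' where "d' = lin TT d + qsmult (- k) d"
  define g' where "g' = lin TT g + qsmult (- k) g + qsmult s c"
  have kn: "k \<noteq> 0" using two by (simp add: k_def)
  have d'Q: "d' \<in> QSym" unfolding d'_def using d by (intro QSym_add QSym_qsmult lin_QSym[OF gcm_TT[OF two]])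
  have d'k: "\<forall>\<beta>\<in>Poly_Mapping.keys d'. length \<beta> \<le> j"
  proof
    fix \<beta> assume b: "\<beta> \<in> Poly_Mapping.keys d'"
    show "length \<beta> \<le> j"
    proof (rule ccontr)
      assume "\<not> length \<beta> \<le> j"
      then have l: "Suc j \<le> length \<beta>" by simp
      have t: "Poly_Mapping.lookup (lin TT d) \<beta> = (2::'k) ^ length \<beta> * Poly_Mapping.lookup d \<beta>"
        by (rule tri[OF d l])
      have "Poly_Mapping.lookup d' \<beta> = 0"
      proof (cases "length \<beta> = Suc j")
        case True then show ?thesis by (simp add: d'_def lookup_add t k_def)
      next
        case False
        then have "\<beta> \<notin> Poly_Mapping.keys d" using d(2) l by fastforce
        then show ?thesis by (simp add: d'_def lookup_add t in_keys_iff)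
      qed
      then show False using b by (simp add: in_keys_iff)
    qed
  qed
  have g'P: "g' \<in> PP" unfolding g'_def using g c by (intro PP_add PP_qsmult PP_TT)
  have eq: "d' = lin TT g' + qsmult (- k * s) c"
    unfolding d'_def g'_def e by (rule poly_mapping_eqI) (simp add: lin_add lin_qsmult lookup_add algebra_simps)
  show ?thesis using d'Q d'k g'P kn s eq by (intro exI[of _ d'] exI[of _ g'] exI[of _ "- k * s"]) auto
qed

lemma PP_sub_Th: "c \<in> PP \<Longrightarrow> c \<in> lin Th ` QSym" for c :: "'k qsym"
proof -
  assume c: "c \<in> PP"
  define L where "L = Max (insert 0 (length ` Poly_Mapping.keys c))"
  have cL: "\<forall>\<beta>\<in>Poly_Mapping.keys c. length \<beta> \<le> L" unfolding L_def by simp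
  let ?Q = "\<lambda>j. \<exists>(d::'k qsym) g (s::'k). d \<in> QSym \<and> (\<forall>\<beta>\<in>Poly_Mapping.keys d. length \<beta> \<le> j) \<and> g \<in> PP \<and> s \<noteq> 0 \<and> d = lin TT g + qsmult s c"
  have QL: "?Q L"
    using c cL PP_QSym by (intro exI[of _ c] exI[of _ 0] exI[of _ 1]) (auto intro: image_eqI[of 0 _ 0])
  have "\<forall>i\<le>L. ?Q (L - i)"
  proof (intro allI impI)
    fix i assume "i \<le> L"
    then show "?Q (L - i)"
    proof (induction i)
      case 0 then show ?case using QL by simp
    next
      case (Suc i)
      then have "?Q (Suc (L - Suc i))" by (simp add: Suc_diff_Suc)
      then show ?case using surj_step[OF c] by blast
    qed
  qed
  then have "?Q 0" by (metis diff_self_eq_0 order_refl)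
  then obtain d g s where d: "d \<in> QSym" "\<forall>\<beta>\<in>Poly_Mapping.keys d. length \<beta> \<le> 0" and g: "g \<in> PP" and s: "s \<noteq> 0"
    and e: "d = lin TT g + qsmult s c" by blast
  define g'' where "g'' = qsmult (1 / s) (qsmult (Poly_Mapping.lookup d []) (Mb []) + qsmult (- 1) g)"
  have g''P: "g'' \<in> PP" unfolding g''_def using g PP_Mb by (intro PP_add PP_qsmult)
  have TMb: "lin TT (Mb []) = (Mb [] :: 'k qsym)" by (simp add: gcm_Nil[OF gcm_TT[OF two]])
  have "c = lin TT g''"
  proof -
    have dd: "d = qsmult (Poly_Mapping.lookup d []) (Mb [])" by (rule keys_zero_len[OF d(2)])
    have "qsmult s c = d + qsmult (- 1) (lin TT g)" using e by (rule_tac poly_mapping_eqI) (simp add: lookup_add)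
    then have "c = qsmult (1 / s) (d + qsmult (- 1) (lin TT g))" using s
      by (metis qsmult_qsmult qsmult_1 nonzero_divide_eq_eq divide_self_if mult.commute div_by_1 times_divide_eq_left)
    also have "\<dots> = lin TT g''" unfolding g''_def lin_add lin_qsmult TMb
      by (subst dd) simp
    finally show ?thesis .
  qed
  then obtain h where "h \<in> QSym" "c = lin TT (lin Psi h)" using g''P by blast
  then show ?thesis by (simp add: TT_Psi_lin)
qed

lemma ker_eq: "{f \<in> (QSym :: 'k qsym set). lin Psi f = 0} = {f \<in> QSym. lin Th f = 0}"
proof (intro set_eqI iffI)
  fix f :: "'k qsym" assume "f \<in> {f \<in> QSym. lin Psi f = 0}"
  then show "f \<in> {f \<in> QSym. lin Th f = 0}" using Th_Psi_lin[of f] by simp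
next
  fix f :: "'k qsym" assume f: "f \<in> {f \<in> QSym. lin Th f = 0}"
  then have "lin TT (lin Psi f) = 0" by (simp add: TT_Psi_lin)
  then have "lin Psi f = 0" by (rule TT_inj[OF lin_QSym[OF gcm_Psi[OF two]]])
  then show "f \<in> {f \<in> QSym. lin Psi f = 0}" using f by simp
qed

lemma img_eq: "lin Psi ` (QSym :: 'k qsym set) = lin Th ` QSym"
proof
  show "lin Psi ` QSym \<subseteq> lin Th ` (QSym :: 'k qsym set)" by (rule subsetI) (rule PP_sub_Th)
next
  show "lin Th ` QSym \<subseteq> lin Psi ` (QSym :: 'k qsym set)"
  proof
    fix x :: "'k qsym" assume "x \<in> lin Th ` QSym"
    then obtain h where h: "h \<in> QSym" "x = lin Th h" by blast
    then have "x = lin Psi (lin Th h)" by (simp add: Psi_Th_lin)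
    then show "x \<in> lin Psi ` QSym" using lin_QSym[OF gcm_Th[OF two]] by blast
  qed
qed

end


lemma tspan_add: "t1 \<in> tensor_span C \<Longrightarrow> t2 \<in> tensor_span C \<Longrightarrow> t1 + t2 \<in> tensor_span C"
  by (induction t1 rule: tensor_span.induct) (auto simp: add.assoc intro: tensor_span.add)

lemma tspan_sum: "finite S \<Longrightarrow> (\<And>s. s \<in> S \<Longrightarrow> x s \<in> C \<and> y s \<in> C) \<Longrightarrow> (\<Sum>s\<in>S. tensor (x s) (y s)) \<in> tensor_span C"
proof (induction S rule: finite_induct)
  case empty then show ?case by (simp add: tensor_span.zero)
next
  case (insert s S)
  then show ?case by (simp add: tensor_span.add)
qed

lemma map_tensor: "Poly_Mapping.map ((*) c) (tensor x y) = tensor (qsmult c x) y"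
  for c :: "'k::field"
proof (rule poly_mapping_eqI)
  fix k :: "nat list \<times> nat list"
  obtain u v where "k = (u, v)" by force
  then show "Poly_Mapping.lookup (Poly_Mapping.map ((*) c) (tensor x y)) k = Poly_Mapping.lookup (tensor (qsmult c x) y) k"
    by (simp add: lookup_map_mult lookup_tensor)
qed

lemma tspan_congr:
  assumes "t \<in> tensor_span C" "\<forall>x\<in>C. EV \<alpha> x = EV \<alpha>' x" "\<forall>x\<in>C. EV \<beta> x = EV \<beta>' x"
  shows "EV (\<lambda>p. \<alpha> (fst p) * \<beta> (snd p)) t = EV (\<lambda>p. \<alpha>' (fst p) * \<beta>' (snd p)) t"
  using assms by (induction t rule: tensor_span.induct) (auto simp: EV_add EV_tensor)

lemma coprod_lin:
  assumes F: "gcm F" and f: "f \<in> QSym"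
  shows "coprod (lin F f) = tensor_map F (coprod f)"
proof (rule poly_mapping_eqI)
  fix k :: "nat list \<times> nat list"
  obtain u v where k: "k = (u, v)" by force
  have "Poly_Mapping.lookup (lin F f) (u @ v) = EV (\<lambda>a. \<Sum>i\<le>length a. Poly_Mapping.lookup (F (take i a)) u * Poly_Mapping.lookup (F (drop i a)) v) f"
    unfolding lookup_lin by (rule EV_mono_eq) (use f QSym_keys gcm_coalg[OF F] in blast)
  then show "Poly_Mapping.lookup (coprod (lin F f)) k = Poly_Mapping.lookup (tensor_map F (coprod f)) k"
    by (simp add: k lookup_coprod lookup_tensor_map EV_coprod)
qed

lemma EV_hcomp: "EV h (hcomp n f) = EV (\<lambda>a. if sum_list a = n then h a else 0) f"
proof -
  have "EV h (hcomp n f) = (\<Sum>a\<in>{a\<in>Poly_Mapping.keys f. sum_list a = n}. Poly_Mapping.lookup f a * h a)"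
    unfolding hcomp_def EV_sum EV_single ..
  also have "\<dots> = (\<Sum>a\<in>Poly_Mapping.keys f. if sum_list a = n then Poly_Mapping.lookup f a * h a else 0)"
    by (rule sum.inter_filter) simp
  also have "\<dots> = EV (\<lambda>a. if sum_list a = n then h a else 0) f"
    unfolding EV_def by (rule sum.cong) auto
  finally show ?thesis .
qed

lemma hcomp_QSym: "f \<in> QSym \<Longrightarrow> hcomp n f \<in> QSym"
  by (auto simp: QSym_def in_keys_iff lookup_hcomp split: if_splits)

lemma hcomp_lin:
  assumes F: "gcm F"
  shows "hcomp n (lin F f) = lin F (hcomp n f)"
proof (rule poly_mapping_eqI)
  fix \<beta>
  have "EV (\<lambda>a. if sum_list \<beta> = n then Poly_Mapping.lookup (F a) \<beta> else 0) f =
        EV (\<lambda>a. if sum_list a = n then Poly_Mapping.lookup (F a) \<beta> else 0) f"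
  proof (rule EV_mono_eq)
    fix a
    show "(if sum_list \<beta> = n then Poly_Mapping.lookup (F a) \<beta> else 0) = (if sum_list a = n then Poly_Mapping.lookup (F a) \<beta> else 0)"
    proof (cases "Poly_Mapping.lookup (F a) \<beta> = 0")
      case False
      then have "is_comp a" using F gcm_zero by fastforce
      then have "sum_list \<beta> = sum_list a" using False gcm_graded[OF F] by (simp add: in_keys_iff)
      then show ?thesis by simp
    qed simp
  qed
  then show "Poly_Mapping.lookup (hcomp n (lin F f)) \<beta> = Poly_Mapping.lookup (lin F (hcomp n f)) \<beta>"
    unfolding lookup_hcomp lookup_lin EV_hcomp EV_if_const .
qed

lemma ev_lin: "ev \<alpha> (lin F f) = EV (pull F \<alpha>) f"
  by (simp add: ev_EV EV_lin pull_def)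

lemma ev_conv_coprod: "x \<in> QSym \<Longrightarrow> ev (conv \<alpha> \<beta>) x = EV (\<lambda>p. \<alpha> (fst p) * \<beta> (snd p)) (coprod x)"
  unfolding ev_EV EV_coprod
  by (rule EV_mono_eq) (auto simp: conv_def cv_def QSym_keys)


lemma EV_decomp: "EV h x = (\<Sum>n\<in>sum_list ` Poly_Mapping.keys x. EV h (hcomp n x))"
proof -
  have "(\<Sum>n\<in>sum_list ` Poly_Mapping.keys x. EV h (hcomp n x)) =
        (\<Sum>n\<in>sum_list ` Poly_Mapping.keys x. EV (\<lambda>a. if sum_list a = n then h a else 0) x)"
    by (simp add: EV_hcomp)
  also have "\<dots> = EV (\<lambda>a. \<Sum>n\<in>sum_list ` Poly_Mapping.keys x. if sum_list a = n then h a else 0) x"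
    by (rule EV_sum_fun[symmetric])
  also have "\<dots> = EV h x"
    by (rule EV_mono_eq) (simp add: sum.delta')
  finally show ?thesis by simp
qed

lemma hcomp_homog: "\<beta> \<in> Poly_Mapping.keys (hcomp n x) \<Longrightarrow> sum_list \<beta> = n"
  by (simp add: in_keys_iff lookup_hcomp split: if_splits)

definition Ap :: "(nat list \<Rightarrow> 'k::field) \<Rightarrow> nat \<Rightarrow> nat list \<Rightarrow> 'k" where
  "Ap A p u = (if sum_list u = p then A u else 0)"

lemma EV_Ap: "EV (Ap A p) z = EV A (hcomp p z)"
  by (simp add: EV_hcomp Ap_def[abs_def])

lemma sum_take_pos: "is_comp a \<Longrightarrow> i \<le> length a \<Longrightarrow> 1 \<le> sum_list (take i a) \<longleftrightarrow> 1 \<le> i"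
  using comp_sum_pos[of "take i a"] is_comp_take[of a i] by (cases "i = 0"; cases a) (auto simp: Suc_le_eq)

lemma sum_take_lt: "is_comp a \<Longrightarrow> i \<le> length a \<Longrightarrow> sum_list (take i a) < sum_list a \<longleftrightarrow> i < length a"
  using comp_sum_pos[of "drop i a"] is_comp_drop[of a i] sum_list_take_drop[of i a] by (cases "i < length a") auto

lemma PW:
  fixes A :: "nat list \<Rightarrow> 'k::field"
  assumes a: "is_comp a" and s: "sum_list a = n" and n: "0 < n" and A0: "A [] = 1"
  shows "cv A A a = 2 * A a + (\<Sum>p\<in>{1..<n}. cv (Ap A p) (Ap A (n - p)) a)"
proof -
  have ne: "a \<noteq> []" using s n by auto
  have "(\<Sum>p\<in>{1..<n}. cv (Ap A p) (Ap A (n - p)) a) =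
        (\<Sum>i\<le>length a. \<Sum>p\<in>{1..<n}. (if sum_list (take i a) = p then A (take i a) else 0) *
                                       (if sum_list (drop i a) = n - p then A (drop i a) else 0))"
    unfolding cv_def Ap_def by (rule sum.swap)
  also have "\<dots> = (\<Sum>i\<le>length a. if i \<in> {1..<length a} then A (take i a) * A (drop i a) else 0)"
  proof (rule sum.cong[OF refl])
    fix i assume i: "i \<in> {..length a}"
    have sd: "sum_list (drop i a) = n - sum_list (take i a)" using sum_list_take_drop[of i a] s by simp
    have "(\<Sum>p\<in>{1..<n}. (if sum_list (take i a) = p then A (take i a) else 0) *
                       (if sum_list (drop i a) = n - p then A (drop i a) else 0)) =
          (\<Sum>p\<in>{1..<n}. if sum_list (take i a) = p then A (take i a) * A (drop i a) else 0)"
      by (rule sum.cong) (auto simp: sd)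
    also have "\<dots> = (if sum_list (take i a) \<in> {1..<n} then A (take i a) * A (drop i a) else 0)"
      by (simp add: sum.delta)
    also have "\<dots> = (if i \<in> {1..<length a} then A (take i a) * A (drop i a) else 0)"
      using sum_take_pos[OF a, of i] sum_take_lt[OF a, of i] i s by auto
    finally show "(\<Sum>p\<in>{1..<n}. (if sum_list (take i a) = p then A (take i a) else 0) *
                       (if sum_list (drop i a) = n - p then A (drop i a) else 0)) =
                  (if i \<in> {1..<length a} then A (take i a) * A (drop i a) else 0)" .
  qed
  also have "\<dots> = (\<Sum>i\<in>{1..<length a}. A (take i a) * A (drop i a))"
    by (subst sum.inter_filter[symmetric]) (auto intro: sum.cong)
  finally show ?thesis unfolding cv_split[OF ne] using A0 by simp
qed

context
  assumes two: "(2::'k::field) \<noteq> 0"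
begin

abbreviation ImTh :: "'k qsym set" where "ImTh \<equiv> lin Th ` QSym"

lemma Th_in_Im: "Th x \<in> ImTh"
proof (cases "is_comp x")
  case True
  then have "lin Th (Mb x) = Th x" by simp
  then show ?thesis using QSym_Mb[OF True] by (metis image_eqI)
next
  case False
  then have "Th x = lin Th (0 :: 'k qsym)" using gcm_zero[OF gcm_Th[OF two] False] by simp
  then show ?thesis by (metis QSym_zero image_eqI)
qed

lemma ImTh_qsmult: "y \<in> ImTh \<Longrightarrow> qsmult c y \<in> ImTh"
  by (auto simp flip: lin_qsmult intro: QSym_qsmult)

lemma ImTh_add: "y \<in> ImTh \<Longrightarrow> z \<in> ImTh \<Longrightarrow> y + z \<in> ImTh"
  by (auto simp flip: lin_add intro: QSym_add)

lemma tensor_map_span: "tensor_map Th t \<in> tensor_span ImTh"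
proof -
  have "tensor_map Th t = (\<Sum>p\<in>Poly_Mapping.keys t. tensor (qsmult (Poly_Mapping.lookup t p) (Th (fst p))) (Th (snd p)))"
    by (simp add: tensor_map_def map_tensor)
  also have "\<dots> \<in> tensor_span ImTh"
    by (rule tspan_sum) (auto intro: ImTh_qsmult Th_in_Im)
  finally show ?thesis .
qed

lemma prop_ImTh: "Pi_minus_prop ImTh"
  unfolding Pi_minus_prop_def is_graded_subcoalgebra_def
proof (intro conjI ballI allI)
  show "ImTh \<subseteq> QSym" using lin_QSym[OF gcm_Th[OF two]] by blast
  show "(0 :: 'k qsym) \<in> ImTh" by (metis QSym_zero image_eqI lin_zero)
next
  fix f g :: "'k qsym" assume "f \<in> ImTh" "g \<in> ImTh"
  then show "f + g \<in> ImTh" by (rule ImTh_add)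
next
  fix c :: 'k and f :: "'k qsym" assume "f \<in> ImTh"
  then show "qsmult c f \<in> ImTh" by (rule ImTh_qsmult)
next
  fix f :: "'k qsym" and n assume "f \<in> ImTh"
  then obtain h where h: "h \<in> QSym" "f = lin Th h" by blast
  then show "hcomp n f \<in> ImTh" using hcomp_lin[OF gcm_Th[OF two]] hcomp_QSym by (metis image_eqI)
next
  fix f :: "'k qsym" assume "f \<in> ImTh"
  then obtain h where h: "h \<in> QSym" "f = lin Th h" by blast
  then show "coprod f \<in> tensor_span ImTh" using coprod_lin[OF gcm_Th[OF two]] tensor_map_span by simp
next
  fix f :: "'k qsym" assume "f \<in> ImTh"
  then obtain h where h: "h \<in> QSym" "f = lin Th h" by blast
  have "pull Th (cbar zetaQ) = (cbar thQ :: nat list \<Rightarrow> 'k)" by (simp add: pull_cbar[OF gcm_Th[OF two]] pull_Th[OF two])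
  moreover have "pull Th (cinv zetaQ) = (cinv thQ :: nat list \<Rightarrow> 'k)" by (simp add: pull_cinv[OF gcm_Th[OF two]] pull_Th[OF two])
  ultimately show "ev (cbar zetaQ) f = ev (cinv zetaQ) f" using h by (simp add: ev_lin thQ_odd)
qed

end


context
  assumes two: "(2::'k::field) \<noteq> 0"
begin

lemma PD:
  assumes "Pi_minus_prop (D :: 'k qsym set)"
  shows "D \<subseteq> QSym" "\<And>f n. f \<in> D \<Longrightarrow> hcomp n f \<in> D" "\<And>f. f \<in> D \<Longrightarrow> coprod f \<in> tensor_span D"
    "\<And>f. f \<in> D \<Longrightarrow> ev (cbar zetaQ) f = ev (cinv zetaQ) f"
  using assms by (auto simp: Pi_minus_prop_def is_graded_subcoalgebra_def)

lemma congr_conv_D: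
  assumes P: "Pi_minus_prop (D :: 'k qsym set)"
    and a: "\<forall>x\<in>D. ev \<alpha> x = ev \<alpha>' x" and b: "\<forall>x\<in>D. ev \<beta> x = ev \<beta>' x"
  shows "\<forall>x\<in>D. ev (conv \<alpha> \<beta>) x = ev (conv \<alpha>' \<beta>') x"
proof
  fix x assume x: "x \<in> D"
  have xq: "x \<in> QSym" using PD(1)[OF P] x by blast
  show "ev (conv \<alpha> \<beta>) x = ev (conv \<alpha>' \<beta>') x"
    unfolding ev_conv_coprod[OF xq]
    by (rule tspan_congr[OF PD(3)[OF P x]]) (use a b in \<open>auto simp: ev_EV\<close>)
qed

lemma zeta_sq_D:
  assumes P: "Pi_minus_prop (D :: 'k qsym set)"
  shows "\<forall>x\<in>D. ev (conv zetaQ zetaQ) x = ev (conv zm zm) x"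
proof -
  let ?Z = "zetaQ :: nat list \<Rightarrow> 'k" and ?m = "zm :: nat list \<Rightarrow> 'k"
  have gm: "grp ?m" by (rule zm_grp[OF two])
  have gZ: "grp ?Z" by simp
  have G1: "conv ?Z (cinv ?m) = conv (cbar ?Z) ?m"
  proof -
    have "conv ?Z (cinv ?m) = cbar (zp :: nat list \<Rightarrow> 'k)" using zp_even[OF two] unfolding zp_def by metis
    also have "\<dots> = conv (cbar ?Z) ?m" using gm by (simp add: zp_def cbar_conv cbar_cinv zm_odd[OF two])
    finally show ?thesis .
  qed
  have E1: "\<forall>x\<in>D. ev (conv (cbar ?Z) ?m) x = ev (conv (cinv ?Z) ?m) x"
    by (rule congr_conv_D[OF P]) (use PD(4)[OF P] in auto)
  have E2: "\<forall>x\<in>D. ev (conv ?Z (conv (cbar ?Z) ?m)) x = ev (conv ?Z (conv (cinv ?Z) ?m)) x"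
    by (rule congr_conv_D[OF P]) (use E1 in auto)
  have g2: "conv ?Z (conv (cinv ?Z) ?m) = ?m" using gm gZ
    by (simp add: grp_LF flip: conv_assoc)
  have g3: "conv ?Z (conv (cbar ?Z) ?m) = conv (conv ?Z ?Z) (cinv ?m)" using gm gZ
    by (simp add: grp_LF conv_assoc flip: G1)
  have E3: "\<forall>x\<in>D. ev (conv (conv (conv ?Z ?Z) (cinv ?m)) ?m) x = ev (conv ?m ?m) x"
    by (rule congr_conv_D[OF P]) (use E2 g2 g3 in auto)
  have g4: "conv (conv (conv ?Z ?Z) (cinv ?m)) ?m = conv ?Z ?Z" using gm gZ
    by (simp add: grp_LF conv_assoc)
  show ?thesis using E3 g4 by simp
qed

lemma root_D:
  fixes A B :: "nat list \<Rightarrow> 'k"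
  assumes P: "Pi_minus_prop (D :: 'k qsym set)" and gA: "grp A" and gB: "grp B"
    and sq: "\<forall>x\<in>D. ev (conv A A) x = ev (conv B B) x"
  shows "\<forall>x\<in>D. ev A x = ev B x"
proof -
  have hom: "\<forall>y\<in>D. (\<forall>\<beta>\<in>Poly_Mapping.keys y. sum_list \<beta> = n) \<longrightarrow> ev A y = ev B y" for n
  proof (induction n rule: less_induct)
    case (less n)
    show ?case
    proof (intro ballI impI)
      fix y assume y: "y \<in> D" and h: "\<forall>\<beta>\<in>Poly_Mapping.keys y. sum_list \<beta> = n"
      have yq: "y \<in> QSym" using PD(1)[OF P] y by blast
      have kc: "\<And>a. a \<in> Poly_Mapping.keys y \<Longrightarrow> is_comp a" using yq QSym_keys by blast
      show "ev A y = ev B y"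
      proof (cases "n = 0")
        case True
        have "\<forall>\<beta>\<in>Poly_Mapping.keys y. length \<beta> \<le> 0"
        proof
          fix \<beta> assume b: "\<beta> \<in> Poly_Mapping.keys y"
          have "\<beta> = []"
          proof (rule ccontr)
            assume "\<beta> \<noteq> []"
            then have "0 < sum_list \<beta>" using comp_sum_pos kc[OF b] by blast
            then show False using h b True by simp
          qed
          then show "length \<beta> \<le> 0" by simp
        qed
        then have yy: "y = qsmult (Poly_Mapping.lookup y []) (Mb [])" by (rule keys_zero_len[OF two])
        have "ev X y = Poly_Mapping.lookup y [] * X []" for X :: "nat list \<Rightarrow> 'k"
          by (subst yy) (simp add: ev_EV EV_qsmult EV_Mb)
        then show ?thesis using gA gB by (simp add: grp_def)
      next
        case False
        then have n: "0 < n" by simp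
        have expand: "ev (conv X X) y = 2 * ev X y + (\<Sum>p\<in>{1..<n}. EV (\<lambda>q. Ap X p (fst q) * Ap X (n - p) (snd q)) (coprod y))"
          if gX: "grp X" for X :: "nat list \<Rightarrow> 'k"
        proof -
          have "ev (conv X X) y = EV (\<lambda>a. 2 * X a + (\<Sum>p\<in>{1..<n}. cv (Ap X p) (Ap X (n - p)) a)) y"
            unfolding ev_EV
          proof (rule EV_mono_eq)
            fix a assume a: "a \<in> Poly_Mapping.keys y"
            show "conv X X a = 2 * X a + (\<Sum>p\<in>{1..<n}. cv (Ap X p) (Ap X (n - p)) a)"
              using PW[OF kc[OF a] _ n, of X] h a gX kc[OF a] by (simp add: conv_RR RR_def grp_def)
          qed
          also have "\<dots> = 2 * ev X y + (\<Sum>p\<in>{1..<n}. EV (cv (Ap X p) (Ap X (n - p))) y)"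
            by (simp add: EV_lin_fun EV_scal_fun EV_sum_fun ev_EV)
          also have "\<dots> = 2 * ev X y + (\<Sum>p\<in>{1..<n}. EV (\<lambda>q. Ap X p (fst q) * Ap X (n - p) (snd q)) (coprod y))"
            by (simp add: EV_coprod cv_def[abs_def])
          finally show ?thesis .
        qed
        have mid: "EV (\<lambda>q. Ap A p (fst q) * Ap A (n - p) (snd q)) (coprod y) = EV (\<lambda>q. Ap B p (fst q) * Ap B (n - p) (snd q)) (coprod y)"
          if p: "p \<in> {1..<n}" for p
        proof (rule tspan_congr[OF PD(3)[OF P y]])
          have IHp: "ev A (hcomp r z) = ev B (hcomp r z)" if "r < n" "z \<in> D" for r z
          proof -
            have "hcomp r z \<in> D" by (rule PD(2)[OF P that(2)])
            moreover have "\<forall>\<beta>\<in>Poly_Mapping.keys (hcomp r z). sum_list \<beta> = r" using hcomp_homog by blast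
            ultimately show ?thesis using less[OF that(1)] by blast
          qed
          show "\<forall>x\<in>D. EV (Ap A p) x = EV (Ap B p) x" using IHp p by (simp add: EV_Ap ev_EV)
          show "\<forall>x\<in>D. EV (Ap A (n - p)) x = EV (Ap B (n - p)) x" using IHp p by (simp add: EV_Ap ev_EV)
        qed
        let ?SA = "\<Sum>p\<in>{1..<n}. EV (\<lambda>q. Ap A p (fst q) * Ap A (n - p) (snd q)) (coprod y)"
        let ?SB = "\<Sum>p\<in>{1..<n}. EV (\<lambda>q. Ap B p (fst q) * Ap B (n - p) (snd q)) (coprod y)"
        have s1: "ev (conv A A) y = ev (conv B B) y" using sq y by blast
        have s2: "?SA = ?SB" by (rule sum.cong[OF refl]) (rule mid)
        have "2 * ev A y + ?SA = 2 * ev B y + ?SB"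
          using s1 unfolding expand[OF gA] expand[OF gB] .
        then have "2 * ev A y = 2 * ev B y" using s2 by simp
        then show ?thesis using two by simp
      qed
    qed
  qed
  show ?thesis
  proof
    fix x assume x: "x \<in> D"
    have "ev A x = (\<Sum>n\<in>sum_list ` Poly_Mapping.keys x. ev A (hcomp n x))" by (simp add: ev_EV flip: EV_decomp)
    also have "\<dots> = (\<Sum>n\<in>sum_list ` Poly_Mapping.keys x. ev B (hcomp n x))"
    proof (rule sum.cong[OF refl])
      fix n
      have "hcomp n x \<in> D" by (rule PD(2)[OF P x])
      moreover have "\<forall>\<beta>\<in>Poly_Mapping.keys (hcomp n x). sum_list \<beta> = n" using hcomp_homog by blast
      ultimately show "ev A (hcomp n x) = ev B (hcomp n x)" using hom by blast
    qed
    also have "\<dots> = ev B x" by (simp add: ev_EV flip: EV_decomp)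
    finally show "ev A x = ev B x" .
  qed
qed

end


lemma QSym_lookup_noncomp: "f \<in> QSym \<Longrightarrow> \<not> is_comp \<beta> \<Longrightarrow> Poly_Mapping.lookup f \<beta> = 0"
  by (auto simp: QSym_def in_keys_iff)

context
  assumes two: "(2::'k::field) \<noteq> 0"
begin

lemma deg1_fix:
  fixes x :: "'k qsym"
  assumes P: "Pi_minus_prop D" and st: "\<forall>x\<in>D. ev zm x = ev zetaQ x" and x: "x \<in> D"
  shows "Poly_Mapping.lookup (lin Psi x) [n] = Poly_Mapping.lookup x [n]"
proof (cases "n = 0")
  case True
  have xq: "x \<in> QSym" using PD(1)[OF two P] x by blast
  have "lin Psi x \<in> QSym" by (rule lin_QSym[OF gcm_Psi[OF two]])
  then show ?thesis using xq True by (simp add: QSym_lookup_noncomp)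
next
  case False
  have xq: "x \<in> QSym" using PD(1)[OF two P] x by blast
  have "Poly_Mapping.lookup (lin Psi x) [n] = EV (\<lambda>a. if sum_list a = n then zm a else 0) x"
    unfolding lookup_lin
  proof (rule EV_mono_eq)
    fix a assume a: "a \<in> Poly_Mapping.keys x"
    then have ca: "is_comp a" using xq QSym_keys by blast
    have "ev zetaQ (Psi a) = (zm a :: 'k)" using pull_Psi[OF two] by (metis pull_def)
    show "Poly_Mapping.lookup (Psi a) [n] = (if sum_list a = n then zm a else (0::'k))"
    proof (cases "sum_list a = n")
      case True
      then have "a \<noteq> []" using False by auto
      then show ?thesis using gcm_single[OF gcm_Psi[OF two] ca, of n] True \<open>ev zetaQ (Psi a) = zm a\<close> by simp
    next
      case False
      then show ?thesis using gcm_single[OF gcm_Psi[OF two] ca, of n] by simp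
    qed
  qed
  also have "\<dots> = ev zm (hcomp n x)" by (simp add: EV_hcomp ev_EV)
  also have "\<dots> = ev zetaQ (hcomp n x)" using st PD(2)[OF two P x] by blast
  also have "\<dots> = EV (\<lambda>a. if a = [n] then 1 else 0) x"
    unfolding ev_EV EV_hcomp
  proof (rule EV_mono_eq)
    fix a assume a: "a \<in> Poly_Mapping.keys x"
    then have ca: "is_comp a" using xq QSym_keys by blast
    show "(if sum_list a = n then zetaQ a else 0) = (if a = [n] then 1 else (0::'k))"
    proof (cases a)
      case Nil then show ?thesis using False by simp
    next
      case (Cons y r)
      then show ?thesis using ca by (cases r) (auto simp: zetaQ_def)
    qed
  qed
  also have "\<dots> = Poly_Mapping.lookup x [n]" by (rule EV_lookup)
  finally show ?thesis .
qed

lemma star_D: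
  assumes P: "Pi_minus_prop (D :: 'k qsym set)"
  shows "\<forall>x\<in>D. ev zm x = ev zetaQ x"
  using root_D[OF two P zetaQ_grp zm_grp[OF two] zeta_sq_D[OF two P]] by simp

lemma Psi_fix:
  assumes P: "Pi_minus_prop (D :: 'k qsym set)"
  shows "\<forall>c\<in>D. Poly_Mapping.lookup (lin Psi c) \<beta> = Poly_Mapping.lookup c \<beta>"
proof (induction \<beta>)
  case Nil
  show ?case
  proof
    fix c assume "c \<in> D"
    have "Poly_Mapping.lookup (lin Psi c) [] = EV (\<lambda>a. if a = [] then 1 else 0) c"
      unfolding lookup_lin by (rule EV_mono_eq) (simp add: gcm_counit[OF gcm_Psi[OF two]])
    then show "Poly_Mapping.lookup (lin Psi c) [] = Poly_Mapping.lookup c []" by (simp add: EV_lookup)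
  qed
next
  case (Cons n \<beta>)
  show ?case
  proof
    fix c assume c: "c \<in> D"
    have cq: "c \<in> QSym" using PD(1)[OF two P] c by blast
    have "Poly_Mapping.lookup (lin Psi c) (n # \<beta>) = Poly_Mapping.lookup (coprod (lin Psi c)) ([n], \<beta>)"
      by (simp add: lookup_coprod)
    also have "\<dots> = EV (\<lambda>p. Poly_Mapping.lookup (Psi (fst p)) [n] * Poly_Mapping.lookup (Psi (snd p)) \<beta>) (coprod c)"
      by (simp add: coprod_lin[OF gcm_Psi[OF two] cq] lookup_tensor_map)
    also have "\<dots> = EV (\<lambda>p. (if fst p = [n] then 1 else 0) * (if snd p = \<beta> then 1 else 0)) (coprod c)"
    proof (rule tspan_congr[OF PD(3)[OF two P c]])
      show "\<forall>x\<in>D. EV (\<lambda>a. Poly_Mapping.lookup (Psi a) [n]) x = EV (\<lambda>a. if a = [n] then 1 else 0) x"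
        using deg1_fix[OF P star_D[OF P]] by (simp add: EV_lookup flip: lookup_lin)
      show "\<forall>x\<in>D. EV (\<lambda>a. Poly_Mapping.lookup (Psi a) \<beta>) x = EV (\<lambda>a. if a = \<beta> then 1 else 0) x"
        using Cons by (simp add: EV_lookup flip: lookup_lin)
    qed
    also have "\<dots> = EV (\<lambda>p. if p = ([n], \<beta>) then 1 else 0) (coprod c)"
      by (rule EV_mono_eq) auto
    also have "\<dots> = Poly_Mapping.lookup c (n # \<beta>)" by (simp add: EV_lookup lookup_coprod)
    finally show "Poly_Mapping.lookup (lin Psi c) (n # \<beta>) = Poly_Mapping.lookup c (n # \<beta>)" .
  qed
qed

lemma maximal:
  assumes P: "Pi_minus_prop (D :: 'k qsym set)"
  shows "D \<subseteq> ImTh"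
proof
  fix c assume c: "c \<in> D"
  have "lin Psi c = c" using Psi_fix[OF P] c by (auto intro: poly_mapping_eqI)
  moreover have "c \<in> QSym" using PD(1)[OF two P] c by blast
  ultimately have "c \<in> lin Psi ` QSym" by (metis image_eqI)
  then show "c \<in> ImTh" by (rule PP_sub_Th[OF two])
qed

lemma Pi_minus_eq: "Pi_minus = (ImTh :: 'k qsym set)"
  unfolding Pi_minus_def
proof (rule the_equality)
  show "Pi_minus_prop (ImTh :: 'k qsym set) \<and> (\<forall>D. Pi_minus_prop D \<longrightarrow> D \<subseteq> (ImTh :: 'k qsym set))"
    using prop_ImTh[OF two] maximal by simp
next
  fix C :: "'k qsym set" assume h: "Pi_minus_prop C \<and> (\<forall>D. Pi_minus_prop D \<longrightarrow> D \<subseteq> C)"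
  then have pC: "Pi_minus_prop C" and mC: "\<forall>D. Pi_minus_prop D \<longrightarrow> D \<subseteq> C" by auto
  have "C \<subseteq> ImTh" by (rule maximal[OF pC])
  moreover have "ImTh \<subseteq> C" by (rule mC[rule_format, OF prop_ImTh[OF two]])
  ultimately show "C = ImTh" by (rule subset_antisym)
qed

end

theorem proposition6p9:
  assumes "(2::'k::field) \<noteq> 0"
  shows "(\<forall>f\<in>(QSym :: 'k qsym set). lin Theta (lin Psi_minus f) = lin Theta f
                                   \<and> lin Psi_minus (lin Theta f) = lin Theta f)
         \<and> lin Psi_minus ` (QSym :: 'k qsym set) = lin Theta ` QSym
         \<and> lin Theta ` (QSym :: 'k qsym set) = Pi_minus
         \<and> {f \<in> (QSym :: 'k qsym set). lin Psi_minus f = 0} = {f \<in> QSym. lin Theta f = 0}"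
proof -
  have e1: "(Psi_minus :: nat list \<Rightarrow> 'k qsym) = Psi" by (rule Psi_minus_eq[OF assms])
  have e2: "(Theta :: nat list \<Rightarrow> 'k qsym) = Th" by (rule Theta_eq[OF assms])
  show ?thesis unfolding e1 e2
    using Th_Psi_lin[OF assms] Psi_Th_lin[OF assms] img_eq[OF assms] Pi_minus_eq[OF assms] ker_eq[OF assms]
    by simp
qed


end
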